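(* Let $a,x,b,y\ge1$ be integers and $\lambda/\mu=(a+b+1,(a+1)^x,1^y)/(1)$. Then $\mathrm{supp}(\lambda/\mu)=[\mathbf w,\mathbf n]$ if and only if $b=y=1$. In that case $[\mathbf w,\mathbf n]=\mathrm{supp}(\lambda/\mu)=\{((x+1)^{a+1},1),\,(x+2,(x+1)^{a-1},x,1),\,(x+2,(x+1)^a)\}$ and $s_{\lambda/\mu}$ is the sum of the three Schur functions $s_{\xi'}$ for these $\xi$, each with coefficient $1$.
   Context: For $\mu\subseteq\lambda$, $\lambda/\mu$ is the skew diagram of boxes of $\lambda$ not in $\mu$ (English notation); $\xi'$ is the conjugate partition. $\mathbf w$ is the partition of column lengths sorted decreasingly, $\mathbf n$ the conjugate of the partition of row lengths sorted decreasingly, $[\mathbf w,\mathbf n]$ the dominance interval, and $\mathrm{supp}(\lambda/\mu)=\{\nu':c^\lambda_{\mu\nu}>0\}$ where $s_{\lambda/\mu}=\sum_\nu c^\lambda_{\mu\nu}s_\nu$. *)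

theory Defs
  imports Main
begin

definition is_partition :: "nat list \<Rightarrow> bool" where
  "is_partition \<nu> \<longleftrightarrow> sorted_wrt (\<ge>) \<nu> \<and> 0 \<notin> set \<nu>"

definition conj_part :: "nat list \<Rightarrow> nat list" where
  "conj_part \<nu> = map (\<lambda>j. length (filter (\<lambda>p. j < p) \<nu>)) [0..<(if \<nu> = [] then 0 else hd \<nu>)]"

text \<open>Boxes (row i, column j), 0-indexed, English notation, of lambda/mu.\<close>
definition skew_cells :: "nat list \<Rightarrow> nat list \<Rightarrow> (nat \<times> nat) set" where
  "skew_cells lam mu = {(i, j). i < length lam \<and> j < lam ! i \<and> \<not> (i < length mu \<and> j < mu ! i)}"

definition sort_desc :: "nat list \<Rightarrow> nat list" where
  "sort_desc xs = rev (sort xs)"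

text \<open>Nonzero column lengths of lambda/mu, sorted decreasingly (the partition w).\<close>
definition skew_w :: "nat list \<Rightarrow> nat list \<Rightarrow> nat list" where
  "skew_w lam mu = sort_desc (filter (\<lambda>l. 0 < l)
      (map (\<lambda>j. card {i. (i, j) \<in> skew_cells lam mu}) [0..<(if lam = [] then 0 else hd lam)]))"

text \<open>Conjugate of the nonzero row lengths sorted decreasingly (the partition n).\<close>
definition skew_n :: "nat list \<Rightarrow> nat list \<Rightarrow> nat list" where
  "skew_n lam mu = conj_part (sort_desc (filter (\<lambda>l. 0 < l)
      (map (\<lambda>i. card {j. (i, j) \<in> skew_cells lam mu}) [0..<length lam])))"

definition dominates_le :: "nat list \<Rightarrow> nat list \<Rightarrow> bool" where
  "dominates_le \<nu> \<rho> \<longleftrightarrow> sum_list \<nu> = sum_list \<rho> \<and>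
      (\<forall>k. sum_list (take k \<nu>) \<le> sum_list (take k \<rho>))"

definition dom_interval :: "nat list \<Rightarrow> nat list \<Rightarrow> nat list set" where
  "dom_interval w n = {\<nu>. is_partition \<nu> \<and> dominates_le w \<nu> \<and> dominates_le \<nu> n}"

text \<open>Semistandard (skew) tableaux of shape lambda/mu with content alpha
  (entry k+1 occurs alpha!k times); the tableau is zero outside the shape.\<close>
definition ssyt :: "nat list \<Rightarrow> nat list \<Rightarrow> nat list \<Rightarrow> (nat \<times> nat \<Rightarrow> nat) set" where
  "ssyt lam mu \<alpha> = {T.
     (\<forall>c. c \<notin> skew_cells lam mu \<longrightarrow> T c = 0) \<and>
     (\<forall>c\<in>skew_cells lam mu. 1 \<le> T c \<and> T c \<le> length \<alpha>) \<and>
     (\<forall>i j. (i, j) \<in> skew_cells lam mu \<longrightarrow> (i, Suc j) \<in> skew_cells lam mu \<longrightarrow> T (i, j) \<le> T (i, Suc j)) \<and>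
     (\<forall>i j. (i, j) \<in> skew_cells lam mu \<longrightarrow> (Suc i, j) \<in> skew_cells lam mu \<longrightarrow> T (i, j) < T (Suc i, j)) \<and>
     (\<forall>k < length \<alpha>. card {c \<in> skew_cells lam mu. T c = Suc k} = \<alpha> ! k)}"

text \<open>Skew Kostka number = coefficient of x^alpha in s_{lambda/mu}.\<close>
definition kostka :: "nat list \<Rightarrow> nat list \<Rightarrow> nat list \<Rightarrow> nat" where
  "kostka lam mu \<alpha> = card (ssyt lam mu \<alpha>)"

definition partitions_of :: "nat \<Rightarrow> nat list set" where
  "partitions_of m = {\<nu>. is_partition \<nu> \<and> sum_list \<nu> = m}"

text \<open>The Schur expansion coefficients c^lambda_{mu nu}: the unique integer
  coefficients (supported on partitions of |lambda/mu|) with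
  s_{lambda/mu} = sum_nu c_nu s_nu, compared coefficientwise on all monomials x^alpha.\<close>
definition lr_coeff :: "nat list \<Rightarrow> nat list \<Rightarrow> nat list \<Rightarrow> int" where
  "lr_coeff lam mu = (THE c.
      (\<forall>\<nu>. \<nu> \<notin> partitions_of (card (skew_cells lam mu)) \<longrightarrow> c \<nu> = 0) \<and>
      (\<forall>\<alpha>. int (kostka lam mu \<alpha>) =
          (\<Sum>\<nu>\<in>partitions_of (card (skew_cells lam mu)). c \<nu> * int (kostka \<nu> [] \<alpha>))))"

definition skew_supp :: "nat list \<Rightarrow> nat list \<Rightarrow> nat list set" where
  "skew_supp lam mu = {conj_part \<nu> | \<nu>. is_partition \<nu> \<and> lr_coeff lam mu \<nu> > 0}"

end

theory Submission
  imports Defs "HOL-Library.FuncSet" "HOL-Library.Multiset"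
begin


definition dc :: "(nat \<times> nat) set \<Rightarrow> bool" where
  "dc Y \<longleftrightarrow> (\<forall>i j i' j'. (i, j) \<in> Y \<longrightarrow> i' \<le> i \<longrightarrow> j' \<le> j \<longrightarrow> (i', j') \<in> Y)"

definition jinv :: "(nat \<times> nat) set \<Rightarrow> nat \<Rightarrow> (nat \<times> nat \<Rightarrow> nat) \<Rightarrow> nat \<times> nat \<Rightarrow> bool" where
  "jinv Y n T h \<longleftrightarrow> h \<in> Y \<and> (\<forall>c. c \<notin> Y - {h} \<longrightarrow> T c = 0) \<and> (\<forall>c\<in>Y - {h}. 1 \<le> T c \<and> T c \<le> n) \<and>
    (\<forall>i j. (i, j) \<in> Y - {h} \<longrightarrow> (i, Suc j) \<in> Y - {h} \<longrightarrow> T (i, j) \<le> T (i, Suc j)) \<and>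
    (\<forall>i j. (i, j) \<in> Y - {h} \<longrightarrow> (Suc i, j) \<in> Y - {h} \<longrightarrow> T (i, j) < T (Suc i, j)) \<and>
    (\<forall>i j. h = (Suc i, j) \<longrightarrow> (Suc (Suc i), j) \<in> Y \<longrightarrow> T (i, j) < T (Suc (Suc i), j)) \<and>
    (\<forall>i j. h = (i, Suc j) \<longrightarrow> (i, Suc (Suc j)) \<in> Y \<longrightarrow> T (i, j) \<le> T (i, Suc (Suc j)))"

lemma invI:
  assumes "h \<in> Y" "\<And>c. c \<notin> Y - {h} \<Longrightarrow> T c = 0" "\<And>c. c \<in> Y - {h} \<Longrightarrow> 1 \<le> T c \<and> T c \<le> n"
    "\<And>i j. (i, j) \<in> Y - {h} \<Longrightarrow> (i, Suc j) \<in> Y - {h} \<Longrightarrow> T (i, j) \<le> T (i, Suc j)"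
    "\<And>i j. (i, j) \<in> Y - {h} \<Longrightarrow> (Suc i, j) \<in> Y - {h} \<Longrightarrow> T (i, j) < T (Suc i, j)"
    "\<And>i j. h = (Suc i, j) \<Longrightarrow> (Suc (Suc i), j) \<in> Y \<Longrightarrow> T (i, j) < T (Suc (Suc i), j)"
    "\<And>i j. h = (i, Suc j) \<Longrightarrow> (i, Suc (Suc j)) \<in> Y \<Longrightarrow> T (i, j) \<le> T (i, Suc (Suc j))"
  shows "jinv Y n T h"
  unfolding jinv_def
  apply (intro conjI allI impI ballI)
  apply (rule assms(1))
  apply (erule assms(2))
  apply (drule assms(3), erule conjunct1)
  apply (drule assms(3), erule conjunct2)
  apply (erule assms(4), assumption)
  apply (erule assms(5), assumption)
  apply (erule assms(6), assumption)
  apply (erule assms(7), assumption)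
  done

lemma invD0:
  assumes "jinv Y n T h"
  shows "h \<in> Y" "\<forall>c. c \<notin> Y - {h} \<longrightarrow> T c = 0" "\<forall>c\<in>Y - {h}. 1 \<le> T c \<and> T c \<le> n"
    "\<forall>i j. (i, j) \<in> Y - {h} \<longrightarrow> (i, Suc j) \<in> Y - {h} \<longrightarrow> T (i, j) \<le> T (i, Suc j)"
    "\<forall>i j. (i, j) \<in> Y - {h} \<longrightarrow> (Suc i, j) \<in> Y - {h} \<longrightarrow> T (i, j) < T (Suc i, j)"
    "\<forall>i j. h = (Suc i, j) \<longrightarrow> (Suc (Suc i), j) \<in> Y \<longrightarrow> T (i, j) < T (Suc (Suc i), j)"
    "\<forall>i j. h = (i, Suc j) \<longrightarrow> (i, Suc (Suc j)) \<in> Y \<longrightarrow> T (i, j) \<le> T (i, Suc (Suc j))"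
  using assms unfolding jinv_def
  apply -
  apply (elim conjE, assumption)+
  done

lemmas invD = invD0(1) invD0(2)[rule_format] invD0(3)[rule_format] invD0(4)[rule_format]
  invD0(5)[rule_format] invD0(6)[rule_format] invD0(7)[rule_format]

lemma dcD: "dc Y \<Longrightarrow> (i, j) \<in> Y \<Longrightarrow> i' \<le> i \<Longrightarrow> j' \<le> j \<Longrightarrow> (i', j') \<in> Y"
  unfolding dc_def by blast

lemma inv_down:
  assumes dc: "dc Y" and I: "jinv Y n T (i, j)" and d: "(Suc i, j) \<in> Y"
    and ch: "(i, Suc j) \<in> Y \<Longrightarrow> T (Suc i, j) \<le> T (i, Suc j)"
  shows "jinv Y n (T((i, j) := T (Suc i, j), (Suc i, j) := 0)) (Suc i, j)" (is "jinv Y n ?T _")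
proof -
  note D = dcD[OF dc]
  note I0 = invD[OF I]
  have hY: "(i,j) \<in> Y" by (rule I0(1))
  show ?thesis
  proof (rule invI)
    show "(Suc i, j) \<in> Y" by fact
    show "?T c = 0" if "c \<notin> Y - {(Suc i, j)}" for c
      using that hY I0(2)[of c] by auto
    show "1 \<le> ?T c \<and> ?T c \<le> n" if "c \<in> Y - {(Suc i, j)}" for c
      using that I0(3)[of c] I0(3)[of "(Suc i, j)"] d by auto
  next
    fix a b assume 1: "(a, b) \<in> Y - {(Suc i, j)}" and 2: "(a, Suc b) \<in> Y - {(Suc i, j)}"
    show "?T (a, b) \<le> ?T (a, Suc b)"
    proof (cases "(a, b) = (i, j)")
      case True
      then show ?thesis using 2 ch by auto
    next
      case F1: False
      show ?thesis
      proof (cases "(a, Suc b) = (i, j)")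
        case True
        then have ab: "a = i" "j = Suc b" by auto
        have "(Suc i, b) \<in> Y" using D[OF d, of "Suc i" b] ab by simp
        then have "T (i, b) < T (Suc i, b)" using I0(5)[of i b] 1 ab by auto
        moreover have "T (Suc i, b) \<le> T (Suc i, j)" using I0(4)[of "Suc i" b] \<open>(Suc i, b) \<in> Y\<close> d ab by auto
        ultimately show ?thesis using ab by auto
      next
        case False
        then show ?thesis using F1 1 2 I0(4)[of a b] by auto
      qed
    qed
  next
    fix a b assume 1: "(a, b) \<in> Y - {(Suc i, j)}" and 2: "(Suc a, b) \<in> Y - {(Suc i, j)}"
    show "?T (a, b) < ?T (Suc a, b)"
    proof (cases "(Suc a, b) = (i, j)")
      case True
      then show ?thesis using I0(6)[of a b] d by auto
    next
      case False
      then show ?thesis using 1 2 I0(5)[of a b] by auto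
    qed
  next
    fix a b assume "(Suc i, j) = (Suc a, b)" "(Suc (Suc a), b) \<in> Y"
    then show "?T (a, b) < ?T (Suc (Suc a), b)" using I0(5)[of "Suc i" j] d by auto
  next
    fix a b assume ab0: "(Suc i, j) = (a, Suc b)" and 3: "(a, Suc (Suc b)) \<in> Y"
    then have ab: "a = Suc i" "j = Suc b" by auto
    have "(Suc i, b) \<in> Y" using D[OF d, of "Suc i" b] ab by simp
    then have "T (Suc i, b) \<le> T (Suc i, j)" using I0(4)[of "Suc i" b] d ab by auto
    moreover have "T (Suc i, j) \<le> T (Suc i, Suc j)" using I0(4)[of "Suc i" j] d 3 ab by auto
    ultimately show "?T (a, b) \<le> ?T (a, Suc (Suc b))" using ab by auto
  qed
qed


lemma inv_right:
  assumes dc: "dc Y" and I: "jinv Y n T (i, j)" and r: "(i, Suc j) \<in> Y"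
    and ch: "(Suc i, j) \<in> Y \<Longrightarrow> T (i, Suc j) < T (Suc i, j)"
  shows "jinv Y n (T((i, j) := T (i, Suc j), (i, Suc j) := 0)) (i, Suc j)" (is "jinv Y n ?T _")
proof -
  note D = dcD[OF dc]
  note I0 = invD[OF I]
  have hY: "(i,j) \<in> Y" by (rule I0(1))
  show ?thesis
  proof (rule invI)
    show "(i, Suc j) \<in> Y" by fact
    show "?T c = 0" if "c \<notin> Y - {(i, Suc j)}" for c
      using that hY I0(2)[of c] by auto
    show "1 \<le> ?T c \<and> ?T c \<le> n" if "c \<in> Y - {(i, Suc j)}" for c
      using that I0(3)[of c] I0(3)[of "(i, Suc j)"] r by auto
  next
    fix a b assume 1: "(a, b) \<in> Y - {(i, Suc j)}" and 2: "(a, Suc b) \<in> Y - {(i, Suc j)}"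
    show "?T (a, b) \<le> ?T (a, Suc b)"
    proof (cases "(a, b) = (i, j)")
      case True
      then show ?thesis using 2 by auto
    next
      case F1: False
      show ?thesis
      proof (cases "(a, Suc b) = (i, j)")
        case True
        then have ab: "a = i" "j = Suc b" by auto
        have "T (i, b) \<le> T (i, Suc j)" using I0(7)[of i b] r ab by auto
        then show ?thesis using ab by auto
      next
        case False
        then show ?thesis using F1 1 2 I0(4)[of a b] by auto
      qed
    qed
  next
    fix a b assume 1: "(a, b) \<in> Y - {(i, Suc j)}" and 2: "(Suc a, b) \<in> Y - {(i, Suc j)}"
    show "?T (a, b) < ?T (Suc a, b)"
    proof (cases "(a, b) = (i, j)")
      case True
      then show ?thesis using 2 ch by auto
    next
      case F1: False
      show ?thesis
      proof (cases "(Suc a, b) = (i, j)")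
        case True
        then have ab: "i = Suc a" "b = j" by auto
        have aY: "(a, Suc j) \<in> Y" using D[OF r, of a "Suc j"] ab by simp
        have "T (a, j) \<le> T (a, Suc j)" using I0(4)[of a j] 1 aY ab by auto
        moreover have "T (a, Suc j) < T (Suc a, Suc j)" using I0(5)[of a "Suc j"] aY r ab by auto
        ultimately show ?thesis using ab by auto
      next
        case False
        then show ?thesis using F1 1 2 I0(5)[of a b] by auto
      qed
    qed
  next
    fix a b assume ab0: "(i, Suc j) = (Suc a, b)" and 3: "(Suc (Suc a), b) \<in> Y"
    then have ab: "i = Suc a" "b = Suc j" by auto
    have aY: "(a, Suc j) \<in> Y" using D[OF r, of a "Suc j"] ab by simp
    have "T (a, Suc j) < T (Suc a, Suc j)" using I0(5)[of a "Suc j"] aY r ab by auto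
    moreover have "T (Suc a, Suc j) < T (Suc (Suc a), Suc j)" using I0(5)[of "Suc a" "Suc j"] r 3 ab by auto
    ultimately show "?T (a, b) < ?T (Suc (Suc a), b)" using ab by auto
  next
    fix a b assume ab0: "(i, Suc j) = (a, Suc b)" and 3: "(a, Suc (Suc b)) \<in> Y"
    then have ab: "a = i" "b = j" by auto
    have "T (i, Suc j) \<le> T (i, Suc (Suc j))" using I0(4)[of i "Suc j"] r 3 ab by auto
    then show "?T (a, b) \<le> ?T (a, Suc (Suc b))" using ab by auto
  qed
qed

lemma inv_up:
  assumes dc: "dc Y" and I: "jinv Y n T (Suc i, j)"
    and ch: "\<And>j'. j = Suc j' \<Longrightarrow> T (Suc i, j') \<le> T (i, j)"
  shows "jinv Y n (T((Suc i, j) := T (i, j), (i, j) := 0)) (i, j)" (is "jinv Y n ?T _")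
proof -
  note D = dcD[OF dc]
  note I0 = invD[OF I]
  have hY: "(Suc i,j) \<in> Y" by (rule I0(1))
  have u: "(i, j) \<in> Y" using D[OF hY, of i j] by simp
  show ?thesis
  proof (rule invI)
    show "(i, j) \<in> Y" by fact
    show "?T c = 0" if "c \<notin> Y - {(i, j)}" for c
      using that hY I0(2)[of c] by auto
    show "1 \<le> ?T c \<and> ?T c \<le> n" if "c \<in> Y - {(i, j)}" for c
      using that I0(3)[of c] I0(3)[of "(i, j)"] u by auto
  next
    fix a b assume 1: "(a, b) \<in> Y - {(i, j)}" and 2: "(a, Suc b) \<in> Y - {(i, j)}"
    show "?T (a, b) \<le> ?T (a, Suc b)"
    proof (cases "(a, b) = (Suc i, j)")
      case True
      then have ab: "a = Suc i" "b = j" by auto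
      have aY: "(i, Suc j) \<in> Y" using D[of "Suc i" "Suc j" i "Suc j"] 2 ab by auto
      have "T (i, j) \<le> T (i, Suc j)" using I0(4)[of i j] u aY by auto
      moreover have "T (i, Suc j) < T (Suc i, Suc j)" using I0(5)[of i "Suc j"] aY 2 ab by auto
      ultimately show ?thesis using ab by auto
    next
      case F1: False
      show ?thesis
      proof (cases "(a, Suc b) = (Suc i, j)")
        case True
        then have ab: "a = Suc i" "j = Suc b" by auto
        then show ?thesis using ch[of b] by auto
      next
        case False
        then show ?thesis using F1 1 2 I0(4)[of a b] by auto
      qed
    qed
  next
    fix a b assume 1: "(a, b) \<in> Y - {(i, j)}" and 2: "(Suc a, b) \<in> Y - {(i, j)}"
    show "?T (a, b) < ?T (Suc a, b)"
    proof (cases "(a, b) = (Suc i, j)")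
      case True
      then show ?thesis using 2 I0(6)[of i j] by auto
    next
      case F1: False
      show ?thesis
      proof (cases "(Suc a, b) = (Suc i, j)")
        case True
        then show ?thesis using 1 by auto
      next
        case False
        then show ?thesis using F1 1 2 I0(5)[of a b] by auto
      qed
    qed
  next
    fix a b assume ab0: "(i, j) = (Suc a, b)" and 3: "(Suc (Suc a), b) \<in> Y"
    then have ab: "i = Suc a" "b = j" by auto
    have aY: "(a, j) \<in> Y" using D[OF u, of a j] ab by simp
    have "T (a, j) < T (i, j)" using I0(5)[of a j] aY u ab by auto
    then show "?T (a, b) < ?T (Suc (Suc a), b)" using ab by auto
  next
    fix a b assume ab0: "(i, j) = (a, Suc b)" and 3: "(a, Suc (Suc b)) \<in> Y"
    then have ab: "a = i" "j = Suc b" by auto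
    have bY: "(i, b) \<in> Y" using D[OF u, of i b] ab by simp
    have "T (i, b) \<le> T (i, j)" using I0(4)[of i b] bY u ab by auto
    moreover have "T (i, j) \<le> T (i, Suc j)" using I0(4)[of i j] u 3 ab by auto
    ultimately show "?T (a, b) \<le> ?T (a, Suc (Suc b))" using ab by auto
  qed
qed

lemma inv_left:
  assumes dc: "dc Y" and I: "jinv Y n T (i, Suc j)"
    and ch: "\<And>i'. i = Suc i' \<Longrightarrow> T (i', Suc j) < T (i, j)"
  shows "jinv Y n (T((i, Suc j) := T (i, j), (i, j) := 0)) (i, j)" (is "jinv Y n ?T _")
proof -
  note D = dcD[OF dc]
  note I0 = invD[OF I]
  have hY: "(i, Suc j) \<in> Y" by (rule I0(1))
  have l: "(i, j) \<in> Y" using D[OF hY, of i j] by simp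
  show ?thesis
  proof (rule invI)
    show "(i, j) \<in> Y" by fact
    show "?T c = 0" if "c \<notin> Y - {(i, j)}" for c
      using that hY I0(2)[of c] by auto
    show "1 \<le> ?T c \<and> ?T c \<le> n" if "c \<in> Y - {(i, j)}" for c
      using that I0(3)[of c] I0(3)[of "(i, j)"] l by auto
  next
    fix a b assume 1: "(a, b) \<in> Y - {(i, j)}" and 2: "(a, Suc b) \<in> Y - {(i, j)}"
    show "?T (a, b) \<le> ?T (a, Suc b)"
    proof (cases "(a, b) = (i, Suc j)")
      case True
      then show ?thesis using 2 I0(7)[of i j] by auto
    next
      case F1: False
      show ?thesis
      proof (cases "(a, Suc b) = (i, Suc j)")
        case True
        then show ?thesis using 1 by auto
      next
        case False
        then show ?thesis using F1 1 2 I0(4)[of a b] by auto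
      qed
    qed
  next
    fix a b assume 1: "(a, b) \<in> Y - {(i, j)}" and 2: "(Suc a, b) \<in> Y - {(i, j)}"
    show "?T (a, b) < ?T (Suc a, b)"
    proof (cases "(a, b) = (i, Suc j)")
      case True
      then have ab: "a = i" "b = Suc j" by auto
      have aY: "(Suc i, j) \<in> Y" using D[of "Suc i" "Suc j" "Suc i" j] 2 ab by auto
      have "T (i, j) < T (Suc i, j)" using I0(5)[of i j] l aY by auto
      moreover have "T (Suc i, j) \<le> T (Suc i, Suc j)" using I0(4)[of "Suc i" j] aY 2 ab by auto
      ultimately show ?thesis using ab by auto
    next
      case F1: False
      show ?thesis
      proof (cases "(Suc a, b) = (i, Suc j)")
        case True
        then have ab: "i = Suc a" "b = Suc j" by auto
        then show ?thesis using ch[of a] by auto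
      next
        case False
        then show ?thesis using F1 1 2 I0(5)[of a b] by auto
      qed
    qed
  next
    fix a b assume ab0: "(i, j) = (Suc a, b)" and 3: "(Suc (Suc a), b) \<in> Y"
    then have ab: "i = Suc a" "b = j" by auto
    have aY: "(a, j) \<in> Y" using D[OF l, of a j] ab by simp
    have "T (a, j) < T (i, j)" using I0(5)[of a j] aY l ab by auto
    moreover have "T (i, j) < T (Suc i, j)" using I0(5)[of i j] l 3 ab by auto
    ultimately show "?T (a, b) < ?T (Suc (Suc a), b)" using ab by auto
  next
    fix a b assume ab0: "(i, j) = (a, Suc b)" and 3: "(a, Suc (Suc b)) \<in> Y"
    then have ab: "a = i" "j = Suc b" by auto
    have bY: "(i, b) \<in> Y" using D[OF l, of i b] ab by simp
    have "T (i, b) \<le> T (i, j)" using I0(4)[of i b] bY l ab by auto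
    then show "?T (a, b) \<le> ?T (a, Suc (Suc b))" using ab by auto
  qed
qed


definition stepf :: "(nat \<times> nat) set \<Rightarrow> (nat \<times> nat \<Rightarrow> nat) \<times> (nat \<times> nat) \<Rightarrow> (nat \<times> nat \<Rightarrow> nat) \<times> (nat \<times> nat)" where
  "stepf Y s = (case s of (T, (i, j)) \<Rightarrow>
     if (Suc i, j) \<in> Y \<and> ((i, Suc j) \<notin> Y \<or> T (Suc i, j) \<le> T (i, Suc j))
     then (T((i, j) := T (Suc i, j), (Suc i, j) := 0), (Suc i, j))
     else if (i, Suc j) \<in> Y then (T((i, j) := T (i, Suc j), (i, Suc j) := 0), (i, Suc j))
     else s)"

definition stepr :: "(nat \<times> nat) set \<Rightarrow> (nat \<times> nat \<Rightarrow> nat) \<times> (nat \<times> nat) \<Rightarrow> (nat \<times> nat \<Rightarrow> nat) \<times> (nat \<times> nat)" where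
  "stepr Y s = (case s of (T, (i, j)) \<Rightarrow>
     if i = 0 \<and> j = 0 then s
     else if j = 0 \<or> (i \<noteq> 0 \<and> T (i, j - 1) \<le> T (i - 1, j))
     then (T((i, j) := T (i - 1, j), (i - 1, j) := 0), (i - 1, j))
     else (T((i, j) := T (i, j - 1), (i, j - 1) := 0), (i, j - 1)))"

definition corner :: "(nat \<times> nat) set \<Rightarrow> nat \<times> nat \<Rightarrow> bool" where
  "corner Y c \<longleftrightarrow> c \<in> Y \<and> (Suc (fst c), snd c) \<notin> Y \<and> (fst c, Suc (snd c)) \<notin> Y"

lemma stepf_down:
  "(Suc i, j) \<in> Y \<Longrightarrow> ((i, Suc j) \<in> Y \<Longrightarrow> T (Suc i, j) \<le> T (i, Suc j)) \<Longrightarrow>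
   stepf Y (T, (i, j)) = (T((i, j) := T (Suc i, j), (Suc i, j) := 0), (Suc i, j))"
  unfolding stepf_def by auto

lemma stepf_right:
  "(i, Suc j) \<in> Y \<Longrightarrow> ((Suc i, j) \<in> Y \<Longrightarrow> T (i, Suc j) < T (Suc i, j)) \<Longrightarrow>
   stepf Y (T, (i, j)) = (T((i, j) := T (i, Suc j), (i, Suc j) := 0), (i, Suc j))"
  unfolding stepf_def by auto

lemma stepf_stop:
  "(Suc i, j) \<notin> Y \<Longrightarrow> (i, Suc j) \<notin> Y \<Longrightarrow> stepf Y (T, (i, j)) = (T, (i, j))"
  unfolding stepf_def by auto

lemma stepr_up:
  "(\<And>j'. j = Suc j' \<Longrightarrow> T (Suc i, j') \<le> T (i, j)) \<Longrightarrow>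
   stepr Y (T, (Suc i, j)) = (T((Suc i, j) := T (i, j), (i, j) := 0), (i, j))"
  unfolding stepr_def by (cases j) auto

lemma stepr_left:
  "(\<And>i'. i = Suc i' \<Longrightarrow> T (i', Suc j) < T (i, j)) \<Longrightarrow>
   stepr Y (T, (i, Suc j)) = (T((i, Suc j) := T (i, j), (i, j) := 0), (i, j))"
  unfolding stepr_def by (cases i) (auto simp: not_le)

lemma stepr_stop: "stepr Y (T, (0, 0)) = (T, (0, 0))"
  unfolding stepr_def by auto

lemma stepf_cases:
  fixes i j :: nat and Y :: "(nat \<times> nat) set" and T :: "nat \<times> nat \<Rightarrow> nat"
  obtains "(Suc i, j) \<in> Y" "(i, Suc j) \<in> Y \<Longrightarrow> T (Suc i, j) \<le> T (i, Suc j)"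
  | "(i, Suc j) \<in> Y" "(Suc i, j) \<in> Y \<Longrightarrow> T (i, Suc j) < T (Suc i, j)"
  | "(Suc i, j) \<notin> Y" "(i, Suc j) \<notin> Y"
  by (cases "(Suc i, j) \<in> Y \<and> ((i, Suc j) \<in> Y \<longrightarrow> T (Suc i, j) \<le> T (i, Suc j))") (auto simp: not_le)

lemma stepr_cases:
  fixes i j :: nat and T :: "nat \<times> nat \<Rightarrow> nat"
  obtains "i = 0" "j = 0"
  | i' where "i = Suc i'" "\<And>j'. j = Suc j' \<Longrightarrow> T (Suc i', j') \<le> T (i', j)"
  | j' where "j = Suc j'" "\<And>i'. i = Suc i' \<Longrightarrow> T (i', Suc j') < T (i, j')"
proof (cases i)
  case 0
  then show ?thesis using that by (cases j) auto
next
  case (Suc i')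
  show ?thesis
  proof (cases j)
    case 0 then show ?thesis using that Suc by auto
  next
    case (Suc j')
    show ?thesis
    proof (cases "T (i, j') \<le> T (i', j)")
      case True then show ?thesis using that \<open>i = Suc i'\<close> Suc by auto
    next
      case False then show ?thesis using that(3)[of j'] \<open>i = Suc i'\<close> Suc by (auto simp: not_le)
    qed
  qed
qed

lemma stepf_inv:
  assumes "dc Y" "jinv Y n T h"
  shows "jinv Y n (fst (stepf Y (T, h))) (snd (stepf Y (T, h)))"
proof -
  obtain i j where h: "h = (i, j)" by (cases h)
  show ?thesis
    apply (rule stepf_cases[where i=i and j=j and Y=Y and T=T])
    using assms h by (simp_all add: stepf_down stepf_right stepf_stop inv_down inv_right)
qed

lemma stepr_inv:
  assumes "dc Y" "jinv Y n T h"
  shows "jinv Y n (fst (stepr Y (T, h))) (snd (stepr Y (T, h)))"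
proof -
  obtain i j where h: "h = (i, j)" by (cases h)
  show ?thesis
    apply (rule stepr_cases[where i=i and j=j and T=T])
    using assms h by (simp_all add: stepr_up stepr_left stepr_stop inv_up inv_left)
qed

lemma stepr_stepf:
  assumes dc: "dc Y" and I: "jinv Y n T h" and nc: "\<not> corner Y h"
  shows "stepr Y (stepf Y (T, h)) = (T, h)"
proof -
  obtain i j where h: "h = (i, j)" by (cases h)
  note I0 = invD[OF I[unfolded h]]
  note D = dcD[OF dc]
  have T0: "T (i, j) = 0" using I0(2) by auto
  show ?thesis
  proof (rule stepf_cases[where i=i and j=j and Y=Y and T=T])
    assume d: "(Suc i, j) \<in> Y" and ch: "(i, Suc j) \<in> Y \<Longrightarrow> T (Suc i, j) \<le> T (i, Suc j)"
    have "T (Suc i, j') \<le> T (Suc i, j)" if "j = Suc j'" for j'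
      using I0(4)[of "Suc i" j'] D[OF d, of "Suc i" j'] d that by auto
    then show ?thesis using d ch h T0
      by (simp add: stepf_down stepr_up fun_eq_iff)
  next
    assume r: "(i, Suc j) \<in> Y" and ch: "(Suc i, j) \<in> Y \<Longrightarrow> T (i, Suc j) < T (Suc i, j)"
    have "T (i', Suc j) < T (i, Suc j)" if "i = Suc i'" for i'
      using I0(5)[of i' "Suc j"] D[OF r, of i' "Suc j"] r that by auto
    then show ?thesis using r ch h T0
      by (simp add: stepf_right stepr_left fun_eq_iff)
  next
    assume "(Suc i, j) \<notin> Y" "(i, Suc j) \<notin> Y"
    then show ?thesis using nc I0(1) h unfolding corner_def by auto
  qed
qed

lemma stepf_stepr:
  assumes dc: "dc Y" and I: "jinv Y n T h" and nz: "h \<noteq> (0, 0)"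
  shows "stepf Y (stepr Y (T, h)) = (T, h)"
proof -
  obtain i j where h: "h = (i, j)" by (cases h)
  note I0 = invD[OF I[unfolded h]]
  note D = dcD[OF dc]
  have T0: "T (i, j) = 0" using I0(2) by auto
  show ?thesis
  proof (rule stepr_cases[where i=i and j=j and T=T])
    assume "i = 0" "j = 0" then show ?thesis using nz h by simp
  next
    fix i' assume i: "i = Suc i'" and ch: "\<And>j'. j = Suc j' \<Longrightarrow> T (Suc i', j') \<le> T (i', j)"
    have hY: "(Suc i', j) \<in> Y" using I0(1) i by simp
    have "T (i', j) \<le> T (i', Suc j)" if "(i', Suc j) \<in> Y"
      using I0(4)[of i' j] D[OF hY, of i' j] that i by auto
    then show ?thesis using i ch h T0 hY
      by (simp add: stepf_down stepr_up fun_eq_iff)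
  next
    fix j' assume j: "j = Suc j'" and ch: "\<And>i'. i = Suc i' \<Longrightarrow> T (i', Suc j') < T (i, j')"
    have hY: "(i, Suc j') \<in> Y" using I0(1) j by simp
    have "T (i, j') < T (Suc i, j')" if "(Suc i, j') \<in> Y"
      using I0(5)[of i j'] D[OF hY, of i j'] that j by auto
    then show ?thesis using j ch h T0 hY
      by (simp add: stepf_right stepr_left fun_eq_iff)
  qed
qed

lemma stepf_dist:
  assumes "h \<in> Y" "\<not> corner Y h"
  shows "fst (snd (stepf Y (T, h))) + snd (snd (stepf Y (T, h))) = Suc (fst h + snd h)"
  using assms unfolding stepf_def corner_def by (cases h) auto

lemma stepr_dist:
  assumes "h \<noteq> (0, 0)"
  shows "Suc (fst (snd (stepr Y (T, h))) + snd (snd (stepr Y (T, h)))) = fst h + snd h"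
  using assms unfolding stepr_def by (cases h) auto

lemma stepf_corner: "corner Y h \<Longrightarrow> stepf Y (T, h) = (T, h)"
  unfolding corner_def by (cases h) (simp add: stepf_stop)


definition invp :: "(nat \<times> nat) set \<Rightarrow> nat \<Rightarrow> (nat \<times> nat \<Rightarrow> nat) \<times> (nat \<times> nat) \<Rightarrow> bool" where
  "invp Y n s \<longleftrightarrow> jinv Y n (fst s) (snd s)"

definition cnt :: "(nat \<times> nat) set \<Rightarrow> (nat \<times> nat \<Rightarrow> nat) \<Rightarrow> nat \<Rightarrow> nat" where
  "cnt Y T m = card {c \<in> Y. T c = Suc m}"

lemma stepf_invp: "dc Y \<Longrightarrow> invp Y n s \<Longrightarrow> invp Y n (stepf Y s)"
  unfolding invp_def using stepf_inv[of Y n "fst s" "snd s"] by simp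

lemma stepr_invp: "dc Y \<Longrightarrow> invp Y n s \<Longrightarrow> invp Y n (stepr Y s)"
  unfolding invp_def using stepr_inv[of Y n "fst s" "snd s"] by simp

lemma funpow_f_invp: "dc Y \<Longrightarrow> invp Y n s \<Longrightarrow> invp Y n ((stepf Y ^^ k) s)"
  by (induction k) (auto intro: stepf_invp)

lemma funpow_r_invp: "dc Y \<Longrightarrow> invp Y n s \<Longrightarrow> invp Y n ((stepr Y ^^ k) s)"
  by (induction k) (auto intro: stepr_invp)

lemma f_progress:
  assumes "dc Y" "invp Y n s"
  shows "corner Y (snd ((stepf Y ^^ k) s)) \<or>
    fst (snd ((stepf Y ^^ k) s)) + snd (snd ((stepf Y ^^ k) s)) = fst (snd s) + snd (snd s) + k"
proof (induction k)
  case 0 then show ?case by simp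
next
  case (Suc k)
  define t where "t = (stepf Y ^^ k) s"
  have It: "invp Y n t" unfolding t_def using funpow_f_invp assms by blast
  have ht: "snd t \<in> Y" using It unfolding invp_def using invD(1) by blast
  have eq: "(stepf Y ^^ Suc k) s = stepf Y t" by (simp add: t_def)
  show ?case
  proof (cases "corner Y (snd t)")
    case True
    then have "stepf Y t = t" using stepf_corner[of Y "snd t" "fst t"] by simp
    then show ?thesis using True eq by simp
  next
    case False
    then have "fst (snd (stepf Y t)) + snd (snd (stepf Y t)) = Suc (fst (snd t) + snd (snd t))"
      using stepf_dist[of "snd t" Y "fst t"] ht by simp
    then show ?thesis using Suc.IH eq False unfolding t_def by auto
  qed
qed

lemma r_progress:
  shows "snd ((stepr Y ^^ k) s) = (0, 0) \<or>
    fst (snd ((stepr Y ^^ k) s)) + snd (snd ((stepr Y ^^ k) s)) + k = fst (snd s) + snd (snd s)"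
proof (induction k)
  case 0 then show ?case by simp
next
  case (Suc k)
  define t where "t = (stepr Y ^^ k) s"
  have eq: "(stepr Y ^^ Suc k) s = stepr Y t" by (simp add: t_def)
  show ?case
  proof (cases "snd t = (0, 0)")
    case True
    then have "stepr Y t = t" using stepr_stop[of Y "fst t"] by (metis prod.collapse)
    then show ?thesis using True eq by simp
  next
    case False
    then have "Suc (fst (snd (stepr Y t)) + snd (snd (stepr Y t))) = fst (snd t) + snd (snd t)"
      using stepr_dist[of "snd t" Y "fst t"] by simp
    then show ?thesis using Suc.IH eq False unfolding t_def by auto
  qed
qed

lemma rf_inverse:
  assumes dc: "dc Y" and I: "invp Y n s" and s0: "snd s = (0, 0)"
  shows "(stepr Y ^^ k) ((stepf Y ^^ k) s) = s"
proof (induction k)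
  case 0 then show ?case by simp
next
  case (Suc k)
  define t where "t = (stepf Y ^^ k) s"
  have It: "invp Y n t" unfolding t_def using funpow_f_invp assms by blast
  have eq: "(stepf Y ^^ Suc k) s = stepf Y t" by (simp add: t_def)
  show ?case
  proof (cases "corner Y (snd t)")
    case True
    then have "stepf Y t = t" using stepf_corner[of Y "snd t" "fst t"] by simp
    moreover have "stepr Y s = s" using s0 stepr_stop[of Y "fst s"] by (metis prod.collapse)
    ultimately show ?thesis using eq Suc.IH unfolding t_def by simp
  next
    case False
    have "stepr Y (stepf Y t) = t"
      using stepr_stepf[of Y n "fst t" "snd t"] dc It False unfolding invp_def by simp
    then show ?thesis using eq Suc.IH unfolding t_def by (simp add: funpow_Suc_right del: funpow.simps)
  qed
qed

lemma fr_inverse: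
  assumes dc: "dc Y" and I: "invp Y n s" and s0: "corner Y (snd s)"
  shows "(stepf Y ^^ k) ((stepr Y ^^ k) s) = s"
proof (induction k)
  case 0 then show ?case by simp
next
  case (Suc k)
  define t where "t = (stepr Y ^^ k) s"
  have It: "invp Y n t" unfolding t_def using funpow_r_invp assms by blast
  have eq: "(stepr Y ^^ Suc k) s = stepr Y t" by (simp add: t_def)
  show ?case
  proof (cases "snd t = (0, 0)")
    case True
    then have "stepr Y t = t" using stepr_stop[of Y "fst t"] by (metis prod.collapse)
    moreover have "stepf Y s = s" using s0 stepf_corner[of Y "snd s" "fst s"] by simp
    ultimately show ?thesis using eq Suc.IH unfolding t_def by simp
  next
    case False
    have "stepf Y (stepr Y t) = t"
      using stepf_stepr[of Y n "fst t" "snd t"] dc It False unfolding invp_def by simp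
    then show ?thesis using eq Suc.IH unfolding t_def by (simp add: funpow_Suc_right del: funpow.simps)
  qed
qed

lemma cnt_swap:
  assumes "finite Y" "h \<in> Y" "d \<in> Y" "h \<noteq> d" "T h = 0"
  shows "cnt Y (T(h := T d, d := 0)) m = cnt Y T m"
proof -
  define A where "A = {c \<in> Y. T c = Suc m}"
  have fA: "finite A" using assms(1) unfolding A_def by simp
  have hA: "h \<notin> A" using assms(5) unfolding A_def by simp
  show ?thesis
  proof (cases "T d = Suc m")
    case True
    have "{c \<in> Y. (T(h := T d, d := 0)) c = Suc m} = insert h (A - {d})"
      using assms True unfolding A_def by auto
    moreover have "d \<in> A" using True assms(3) unfolding A_def by simp
    ultimately show ?thesis unfolding cnt_def A_def[symmetric] using fA hA
      by (simp add: card_insert_if card_Diff_singleton) (metis Suc_pred card_gt_0_iff empty_iff)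
  next
    case False
    have "{c \<in> Y. (T(h := T d, d := 0)) c = Suc m} = A"
      using assms False unfolding A_def by auto
    then show ?thesis unfolding cnt_def A_def by simp
  qed
qed

lemma stepf_cnt:
  assumes "finite Y" "invp Y n s"
  shows "cnt Y (fst (stepf Y s)) m = cnt Y (fst s) m"
proof -
  obtain T i j where s: "s = (T, (i, j))" by (metis prod.collapse)
  have I: "jinv Y n T (i, j)" using assms(2) s unfolding invp_def by simp
  have hY: "(i, j) \<in> Y" using invD(1)[OF I] .
  have T0: "T (i, j) = 0" using invD(2)[OF I] by auto
  show ?thesis
    apply (rule stepf_cases[where i=i and j=j and Y=Y and T=T])
    using s hY T0 assms(1) by (simp_all add: stepf_down stepf_right stepf_stop cnt_swap)
qed

lemma stepr_cnt:
  assumes "finite Y" "dc Y" "invp Y n s"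
  shows "cnt Y (fst (stepr Y s)) m = cnt Y (fst s) m"
proof -
  obtain T i j where s: "s = (T, (i, j))" by (metis prod.collapse)
  have I: "jinv Y n T (i, j)" using assms(3) s unfolding invp_def by simp
  have hY: "(i, j) \<in> Y" using invD(1)[OF I] .
  have T0: "T (i, j) = 0" using invD(2)[OF I] by auto
  note D = dcD[OF assms(2) hY]
  show ?thesis
    apply (rule stepr_cases[where i=i and j=j and T=T])
    using s hY T0 assms(1) D by (auto simp add: stepr_up stepr_left stepr_stop cnt_swap)
qed

lemma funpow_f_cnt: "finite Y \<Longrightarrow> dc Y \<Longrightarrow> invp Y n s \<Longrightarrow> cnt Y (fst ((stepf Y ^^ k) s)) m = cnt Y (fst s) m"
proof (induction k)
  case (Suc k)
  then show ?case using stepf_cnt[of Y n "(stepf Y ^^ k) s" m] funpow_f_invp[of Y n s k] by simp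
qed simp

lemma funpow_r_cnt: "finite Y \<Longrightarrow> dc Y \<Longrightarrow> invp Y n s \<Longrightarrow> cnt Y (fst ((stepr Y ^^ k) s)) m = cnt Y (fst s) m"
proof (induction k)
  case (Suc k)
  then show ?case using stepr_cnt[of Y n "(stepr Y ^^ k) s" m] funpow_r_invp[of Y n s k] by simp
qed simp


definition ssytS :: "(nat \<times> nat) set \<Rightarrow> nat list \<Rightarrow> (nat \<times> nat \<Rightarrow> nat) set" where
  "ssytS S \<alpha> = {T.
     (\<forall>c. c \<notin> S \<longrightarrow> T c = 0) \<and>
     (\<forall>c\<in>S. 1 \<le> T c \<and> T c \<le> length \<alpha>) \<and>
     (\<forall>i j. (i, j) \<in> S \<longrightarrow> (i, Suc j) \<in> S \<longrightarrow> T (i, j) \<le> T (i, Suc j)) \<and>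
     (\<forall>i j. (i, j) \<in> S \<longrightarrow> (Suc i, j) \<in> S \<longrightarrow> T (i, j) < T (Suc i, j)) \<and>
     (\<forall>k < length \<alpha>. card {c \<in> S. T c = Suc k} = \<alpha> ! k)}"

lemma ssyt_eq: "ssyt lam mu \<alpha> = ssytS (skew_cells lam mu) \<alpha>"
  unfolding ssyt_def ssytS_def by simp

lemma finite_funs0:
  assumes "finite S"
  shows "finite {T :: 'a \<Rightarrow> nat. (\<forall>c. c \<notin> S \<longrightarrow> T c = 0) \<and> (\<forall>c. T c \<le> n)}" (is "finite ?A")
proof -
  have inj: "inj_on (\<lambda>T. restrict T S) ?A"
  proof (rule inj_onI)
    fix T1 T2 assume 1: "T1 \<in> ?A" and 2: "T2 \<in> ?A" and 3: "restrict T1 S = restrict T2 S"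
    show "T1 = T2"
    proof
      fix c show "T1 c = T2 c"
      proof (cases "c \<in> S")
        case True
        then show ?thesis using fun_cong[OF 3, of c] by simp
      next
        case False
        then show ?thesis using 1 2 by simp
      qed
    qed
  qed
  have sub: "(\<lambda>T. restrict T S) ` ?A \<subseteq> PiE S (\<lambda>_. {..n})" by auto
  have "finite (PiE S (\<lambda>_. {..n}))" using assms by (simp add: finite_PiE)
  then have "finite ((\<lambda>T. restrict T S) ` ?A)" using sub by (rule finite_subset[rotated])
  then show ?thesis by (rule finite_imageD[OF _ inj])
qed

lemma finite_ssytS: "finite S \<Longrightarrow> finite (ssytS S \<alpha>)"
  apply (rule finite_subset[OF _ finite_funs0[of S "length \<alpha>"]])
  unfolding ssytS_def by auto

lemma ssytSD0:
  assumes "T \<in> ssytS S \<alpha>"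
  shows "\<forall>c. c \<notin> S \<longrightarrow> T c = 0" "\<forall>c\<in>S. 1 \<le> T c \<and> T c \<le> length \<alpha>"
     "\<forall>i j. (i, j) \<in> S \<longrightarrow> (i, Suc j) \<in> S \<longrightarrow> T (i, j) \<le> T (i, Suc j)"
     "\<forall>i j. (i, j) \<in> S \<longrightarrow> (Suc i, j) \<in> S \<longrightarrow> T (i, j) < T (Suc i, j)"
     "\<forall>k < length \<alpha>. card {c \<in> S. T c = Suc k} = \<alpha> ! k"
  using assms unfolding ssytS_def mem_Collect_eq
  apply -
  apply (elim conjE, assumption)+
  done

lemmas ssytSD = ssytSD0(1)[rule_format] ssytSD0(2)[rule_format] ssytSD0(3)[rule_format]
  ssytSD0(4)[rule_format] ssytSD0(5)[rule_format]

lemma ssytSI: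
  assumes "\<And>c. c \<notin> S \<Longrightarrow> T c = 0" "\<And>c. c \<in> S \<Longrightarrow> 1 \<le> T c \<and> T c \<le> length \<alpha>"
     "\<And>i j. (i, j) \<in> S \<Longrightarrow> (i, Suc j) \<in> S \<Longrightarrow> T (i, j) \<le> T (i, Suc j)"
     "\<And>i j. (i, j) \<in> S \<Longrightarrow> (Suc i, j) \<in> S \<Longrightarrow> T (i, j) < T (Suc i, j)"
     "\<And>k. k < length \<alpha> \<Longrightarrow> card {c \<in> S. T c = Suc k} = \<alpha> ! k"
  shows "T \<in> ssytS S \<alpha>"
  unfolding ssytS_def mem_Collect_eq
  apply (intro conjI allI impI ballI)
  apply (erule assms(1))
  apply (drule assms(2), erule conjunct1)
  apply (drule assms(2), erule conjunct2)
  apply (erule assms(3), assumption)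
  apply (erule assms(4), assumption)
  apply (erule assms(5))
  done

lemma ssytS_inv:
  assumes dc: "dc Y" and hY: "h \<in> Y" and hc: "h = (0, 0) \<or> corner Y h"
  shows "T \<in> ssytS (Y - {h}) \<alpha> \<longleftrightarrow> jinv Y (length \<alpha>) T h \<and> (\<forall>k<length \<alpha>. cnt Y T k = \<alpha> ! k)"
proof
  assume T: "T \<in> ssytS (Y - {h}) \<alpha>"
  have T0: "T h = 0" using ssytSD(1)[OF T, of h] by simp
  have cset: "{c \<in> Y - {h}. T c = Suc k} = {c \<in> Y. T c = Suc k}" for k using T0 by auto
  have "jinv Y (length \<alpha>) T h"
  proof (rule invI)
    show "h \<in> Y" by fact
  next
    fix i j assume "h = (Suc i, j)" "(Suc (Suc i), j) \<in> Y"
    then show "T (i, j) < T (Suc (Suc i), j)" using hc dcD[OF dc, of "Suc (Suc i)" j "Suc i" j] unfolding corner_def by auto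
  next
    fix i j assume "h = (i, Suc j)" "(i, Suc (Suc j)) \<in> Y"
    then show "T (i, j) \<le> T (i, Suc (Suc j))" using hc dcD[OF dc, of i "Suc (Suc j)" i "Suc j"] unfolding corner_def by auto
  next
    show "\<And>c. c \<notin> Y - {h} \<Longrightarrow> T c = 0" by (rule ssytSD(1)[OF T])
  next
    show "\<And>c. c \<in> Y - {h} \<Longrightarrow> 1 \<le> T c \<and> T c \<le> length \<alpha>" by (rule ssytSD(2)[OF T])
  next
    show "\<And>i j. (i, j) \<in> Y - {h} \<Longrightarrow> (i, Suc j) \<in> Y - {h} \<Longrightarrow> T (i, j) \<le> T (i, Suc j)"
      by (rule ssytSD(3)[OF T])
  next
    show "\<And>i j. (i, j) \<in> Y - {h} \<Longrightarrow> (Suc i, j) \<in> Y - {h} \<Longrightarrow> T (i, j) < T (Suc i, j)"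
      by (rule ssytSD(4)[OF T])
  qed
  moreover have "\<forall>k<length \<alpha>. cnt Y T k = \<alpha> ! k" using ssytSD(5)[OF T] unfolding cnt_def cset by simp
  ultimately show "jinv Y (length \<alpha>) T h \<and> (\<forall>k<length \<alpha>. cnt Y T k = \<alpha> ! k)" by blast
next
  assume A: "jinv Y (length \<alpha>) T h \<and> (\<forall>k<length \<alpha>. cnt Y T k = \<alpha> ! k)"
  then have I: "jinv Y (length \<alpha>) T h" by blast
  have T0: "T h = 0" using invD(2)[OF I] by auto
  have cset: "{c \<in> Y - {h}. T c = Suc k} = {c \<in> Y. T c = Suc k}" for k using T0 by auto
  show "T \<in> ssytS (Y - {h}) \<alpha>"
  proof (rule ssytSI)
    show "\<And>c. c \<notin> Y - {h} \<Longrightarrow> T c = 0" by (rule invD(2)[OF I])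
    show "\<And>c. c \<in> Y - {h} \<Longrightarrow> 1 \<le> T c \<and> T c \<le> length \<alpha>" by (rule invD(3)[OF I])
    show "\<And>i j. (i, j) \<in> Y - {h} \<Longrightarrow> (i, Suc j) \<in> Y - {h} \<Longrightarrow> T (i, j) \<le> T (i, Suc j)"
      by (rule invD(4)[OF I])
    show "\<And>i j. (i, j) \<in> Y - {h} \<Longrightarrow> (Suc i, j) \<in> Y - {h} \<Longrightarrow> T (i, j) < T (Suc i, j)"
      by (rule invD(5)[OF I])
    show "\<And>k. k < length \<alpha> \<Longrightarrow> card {c \<in> Y - {h}. T c = Suc k} = \<alpha> ! k"
      using A unfolding cset cnt_def by blast
  qed
qed

theorem jdt_count:
  assumes fin: "finite Y" and dc: "dc Y" and o0: "(0, 0) \<in> Y"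
  shows "card (ssytS (Y - {(0, 0)}) \<alpha>) = (\<Sum>c\<in>{c. corner Y c}. card (ssytS (Y - {c}) \<alpha>))"
proof -
  define n where "n = length \<alpha>"
  define B where "B = Suc (Max ((\<lambda>c. fst c + snd c) ` Y))"
  have Bb: "fst c + snd c < B" if "c \<in> Y" for c
    unfolding B_def using fin that by (simp add: le_imp_less_Suc)
  define F where "F T = (stepf Y ^^ B) (T, (0, 0))" for T
  define f where "f T = (snd (F T), fst (F T))" for T
  define g where "g b = fst ((stepr Y ^^ B) (snd b, fst b))" for b :: "(nat \<times> nat) \<times> (nat \<times> nat \<Rightarrow> nat)"
  define A where "A = ssytS (Y - {(0, 0)}) \<alpha>"
  define C where "C = Sigma {c. corner Y c} (\<lambda>c. ssytS (Y - {c}) \<alpha>)"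
  have A_iff: "T \<in> A \<longleftrightarrow> invp Y n (T, (0, 0)) \<and> (\<forall>k<n. cnt Y T k = \<alpha> ! k)" for T
    unfolding A_def invp_def n_def using ssytS_inv[OF dc o0] by simp
  have C_iff: "b \<in> C \<longleftrightarrow> corner Y (fst b) \<and> invp Y n (snd b, fst b) \<and> (\<forall>k<n. cnt Y (snd b) k = \<alpha> ! k)" for b
  proof -
    obtain c T where b: "b = (c, T)" by (cases b)
    show ?thesis
    proof (cases "corner Y c")
      case True
      then have "c \<in> Y" unfolding corner_def by simp
      then show ?thesis unfolding C_def invp_def n_def b using ssytS_inv[OF dc _ disjI2[OF True]] True by simp
    next
      case False
      then show ?thesis unfolding C_def b by simp
    qed
  qed
  have Fcorner: "corner Y (snd (F T))" if "invp Y n (T, (0, 0))" for T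
  proof -
    have "invp Y n (F T)" unfolding F_def using funpow_f_invp[OF dc that] .
    then have "snd (F T) \<in> Y" unfolding invp_def using invD(1) by blast
    then have "fst (snd (F T)) + snd (snd (F T)) < B" using Bb by blast
    then show ?thesis using f_progress[OF dc that, of B] unfolding F_def by auto
  qed
  have Gzero: "snd ((stepr Y ^^ B) s) = (0, 0)" if "invp Y n s" for s
  proof -
    have "snd s \<in> Y" using that unfolding invp_def using invD(1) by blast
    then have "fst (snd s) + snd (snd s) < B" using Bb by blast
    then show ?thesis using r_progress[where k=B and Y=Y and s=s] by auto
  qed
  have "bij_betw f A C"
  proof (rule bij_betw_byWitness[where f'=g])
    show "\<forall>a\<in>A. g (f a) = a"
    proof
      fix T assume "T \<in> A"
      then have I: "invp Y n (T, (0, 0))" using A_iff by blast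
      have "(stepr Y ^^ B) (F T) = (T, (0, 0))" unfolding F_def using rf_inverse[OF dc I] by simp
      then show "g (f T) = T" unfolding g_def f_def by simp
    qed
    show "\<forall>b\<in>C. f (g b) = b"
    proof
      fix b assume "b \<in> C"
      then have c: "corner Y (fst b)" and I: "invp Y n (snd b, fst b)" using C_iff by blast+
      define t where "t = (stepr Y ^^ B) (snd b, fst b)"
      have t0: "snd t = (0, 0)" unfolding t_def using Gzero[OF I] .
      have "(stepf Y ^^ B) t = (snd b, fst b)" unfolding t_def using fr_inverse[OF dc I] c by simp
      then have "F (g b) = (snd b, fst b)" unfolding F_def g_def t_def[symmetric] using t0 by (metis prod.collapse)
      then show "f (g b) = b" unfolding f_def by simp
    qed
    show "f ` A \<subseteq> C"
    proof
      fix b assume "b \<in> f ` A"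
      then obtain T where T: "T \<in> A" "b = f T" by blast
      then have I: "invp Y n (T, (0, 0))" and cn: "\<forall>k<n. cnt Y T k = \<alpha> ! k" using A_iff by blast+
      have "invp Y n (F T)" unfolding F_def using funpow_f_invp[OF dc I] .
      moreover have "cnt Y (fst (F T)) k = cnt Y T k" for k
        unfolding F_def using funpow_f_cnt[OF fin dc I] by simp
      ultimately show "b \<in> C" unfolding C_iff T(2) f_def using Fcorner[OF I] cn by simp
    qed
    show "g ` C \<subseteq> A"
    proof
      fix a assume "a \<in> g ` C"
      then obtain b where b: "b \<in> C" "a = g b" by blast
      then have I: "invp Y n (snd b, fst b)" and cn: "\<forall>k<n. cnt Y (snd b) k = \<alpha> ! k" using C_iff by blast+
      define t where "t = (stepr Y ^^ B) (snd b, fst b)"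
      have t0: "snd t = (0, 0)" unfolding t_def using Gzero[OF I] .
      have It: "invp Y n t" unfolding t_def using funpow_r_invp[OF dc I] .
      have "cnt Y (fst t) k = cnt Y (snd b) k" for k
        unfolding t_def using funpow_r_cnt[OF fin dc I] by simp
      moreover have "a = fst t" unfolding b(2) g_def t_def ..
      ultimately show "a \<in> A" unfolding A_iff using It t0 cn by (metis prod.collapse)
    qed
  qed
  then have "card A = card C" by (rule bij_betw_same_card)
  also have "card C = (\<Sum>c\<in>{c. corner Y c}. card (ssytS (Y - {c}) \<alpha>))"
    unfolding C_def
  proof (rule card_SigmaI)
    show "finite {c. corner Y c}" using fin by (rule finite_subset[rotated]) (auto simp: corner_def)
    show "\<forall>c\<in>{c. corner Y c}. finite (ssytS (Y - {c}) \<alpha>)" using fin by (simp add: finite_ssytS)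
  qed
  finally show ?thesis unfolding A_def .
qed


definition Ysh :: "nat list \<Rightarrow> (nat \<times> nat) set" where
  "Ysh \<nu> = {(i, j). i < length \<nu> \<and> j < \<nu> ! i}"

lemma skew_cells_nil: "skew_cells \<nu> [] = Ysh \<nu>"
  unfolding skew_cells_def Ysh_def by simp

lemma Ysh_rows: "{c \<in> Ysh \<nu>. fst c < k} = (\<Union>i\<in>{..<min k (length \<nu>)}. {i} \<times> {..<\<nu> ! i})"
  unfolding Ysh_def by auto

lemma card_Ysh_rows: "card {c \<in> Ysh \<nu>. fst c < k} = sum_list (take k \<nu>)"
proof -
  have "card {c \<in> Ysh \<nu>. fst c < k} = (\<Sum>i\<in>{..<min k (length \<nu>)}. card ({i} \<times> {..<\<nu> ! i}))"
    unfolding Ysh_rows by (rule card_UN_disjoint) auto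
  also have "\<dots> = (\<Sum>i\<in>{..<min k (length \<nu>)}. \<nu> ! i)" by simp
  also have "\<dots> = sum_list (take k \<nu>)"
    by (simp add: sum_list_sum_nth atLeast0LessThan min.commute)
  finally show ?thesis .
qed

lemma finite_Ysh: "finite (Ysh \<nu>)"
proof -
  have "Ysh \<nu> \<subseteq> {..<length \<nu>} \<times> {..<sum_list \<nu>}"
    unfolding Ysh_def using elem_le_sum_list by fastforce
  then show ?thesis by (rule finite_subset) auto
qed

lemma card_Ysh: "card (Ysh \<nu>) = sum_list \<nu>"
proof -
  have "{c \<in> Ysh \<nu>. fst c < length \<nu>} = Ysh \<nu>" unfolding Ysh_def by auto
  then show ?thesis using card_Ysh_rows[of \<nu> "length \<nu>"] by simp
qed

lemma partition_dc: "is_partition \<nu> \<Longrightarrow> dc (Ysh \<nu>)"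
  unfolding dc_def Ysh_def is_partition_def
  by (auto simp: sorted_wrt_iff_nth_less) (metis le_neq_implies_less less_le_trans order.strict_trans1)

lemma sum_take_nth: "sum_list (take k xs) = (\<Sum>i<min k (length xs). xs ! i)"
  by (simp add: sum_list_sum_nth atLeast0LessThan min.commute)

lemma ssyt_lower:
  assumes dc: "dc Y" and T: "T \<in> ssytS Y \<alpha>"
  shows "(i, j) \<in> Y \<Longrightarrow> Suc i \<le> T (i, j)"
proof (induction i)
  case 0
  then show ?case using ssytSD(2)[OF T, of "(0, j)"] by simp
next
  case (Suc i)
  have "(i, j) \<in> Y" using dcD[OF dc Suc.prems, of i j] by simp
  then show ?case using Suc.IH ssytSD(4)[OF T, of i j] Suc.prems by fastforce
qed

lemma ssyt_count_le:
  assumes fin: "finite Y" and T: "T \<in> ssytS Y \<alpha>"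
  shows "card {c \<in> Y. 1 \<le> T c \<and> T c \<le> k} = sum_list (take k \<alpha>)"
proof -
  have eq: "{c \<in> Y. 1 \<le> T c \<and> T c \<le> k} = (\<Union>m\<in>{..<min k (length \<alpha>)}. {c \<in> Y. T c = Suc m})"
  proof
    show "{c \<in> Y. 1 \<le> T c \<and> T c \<le> k} \<subseteq> (\<Union>m\<in>{..<min k (length \<alpha>)}. {c \<in> Y. T c = Suc m})"
    proof
      fix c assume c: "c \<in> {c \<in> Y. 1 \<le> T c \<and> T c \<le> k}"
      then have "T c \<le> length \<alpha>" using ssytSD(2)[OF T, of c] by simp
      then show "c \<in> (\<Union>m\<in>{..<min k (length \<alpha>)}. {c \<in> Y. T c = Suc m})"
        using c by (auto intro!: bexI[of _ "T c - 1"])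
    qed
  qed auto
  have "card {c \<in> Y. 1 \<le> T c \<and> T c \<le> k} = (\<Sum>m\<in>{..<min k (length \<alpha>)}. card {c \<in> Y. T c = Suc m})"
    unfolding eq by (rule card_UN_disjoint) (use fin in auto)
  also have "\<dots> = (\<Sum>m\<in>{..<min k (length \<alpha>)}. \<alpha> ! m)"
    by (rule sum.cong) (auto intro: ssytSD(5)[OF T])
  finally show ?thesis by (simp add: sum_take_nth)
qed

lemma kostka_dominance:
  assumes P: "is_partition \<nu>" and T: "T \<in> ssytS (Ysh \<nu>) \<alpha>"
  shows "sum_list (take k \<alpha>) \<le> sum_list (take k \<nu>)"
proof -
  have "{c \<in> Ysh \<nu>. 1 \<le> T c \<and> T c \<le> k} \<subseteq> {c \<in> Ysh \<nu>. fst c < k}"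
    using ssyt_lower[OF partition_dc[OF P] T] by force
  then have "card {c \<in> Ysh \<nu>. 1 \<le> T c \<and> T c \<le> k} \<le> card {c \<in> Ysh \<nu>. fst c < k}"
    by (rule card_mono[rotated]) (simp add: finite_Ysh)
  then show ?thesis using ssyt_count_le[OF finite_Ysh T, of k] card_Ysh_rows[of \<nu> k] by simp
qed

definition T0 :: "nat list \<Rightarrow> nat \<times> nat \<Rightarrow> nat" where
  "T0 \<nu> c = (if c \<in> Ysh \<nu> then Suc (fst c) else 0)"

lemma T0_ssyt: "T0 \<nu> \<in> ssytS (Ysh \<nu>) \<nu>"
proof (rule ssytSI)
  fix k assume k: "k < length \<nu>"
  have "{c \<in> Ysh \<nu>. T0 \<nu> c = Suc k} = {k} \<times> {..<\<nu> ! k}"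
    using k unfolding T0_def Ysh_def by auto
  then show "card {c \<in> Ysh \<nu>. T0 \<nu> c = Suc k} = \<nu> ! k" by simp
qed (auto simp: T0_def Ysh_def)

lemma T0_unique:
  assumes P: "is_partition \<nu>" and T: "T \<in> ssytS (Ysh \<nu>) \<nu>"
  shows "T = T0 \<nu>"
proof -
  note low = ssyt_lower[OF partition_dc[OF P] T]
  have row: "\<forall>j. (i, j) \<in> Ysh \<nu> \<longrightarrow> T (i, j) = Suc i" for i
  proof (induction i rule: less_induct)
    case (less i)
    show ?case
    proof (intro allI impI)
      fix j assume ij: "(i, j) \<in> Ysh \<nu>"
      then have il: "i < length \<nu>" unfolding Ysh_def by simp
      define V where "V = {c \<in> Ysh \<nu>. T c = Suc i}"
      define R where "R = {i} \<times> {..<\<nu> ! i}"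
      have VR: "V \<subseteq> R"
      proof
        fix c assume c: "c \<in> V"
        obtain i' j' where c': "c = (i', j')" by (cases c)
        have "Suc i' \<le> Suc i" using low[of i' j'] c c' unfolding V_def by auto
        moreover have "i' \<noteq> i \<Longrightarrow> False"
        proof -
          assume "i' \<noteq> i"
          then have "i' < i" using calculation by simp
          then have "T (i', j') = Suc i'" using less.IH c c' unfolding V_def by blast
          then show False using c c' \<open>i' < i\<close> unfolding V_def by simp
        qed
        ultimately show "c \<in> R" using c c' unfolding V_def R_def Ysh_def by auto
      qed
      have "card V = \<nu> ! i" unfolding V_def using ssytSD(5)[OF T il] .
      moreover have "card R = \<nu> ! i" unfolding R_def by simp
      ultimately have "V = R" using VR by (intro card_subset_eq) (auto simp: R_def)
      moreover have "(i, j) \<in> R" using ij unfolding R_def Ysh_def by simp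
      ultimately show "T (i, j) = Suc i" unfolding V_def by blast
    qed
  qed
  show ?thesis
  proof
    fix c show "T c = T0 \<nu> c"
    proof (cases "c \<in> Ysh \<nu>")
      case True
      then show ?thesis using row[of "fst c"] unfolding T0_def by (cases c) auto
    next
      case False
      then show ?thesis using ssytSD(1)[OF T False] unfolding T0_def by simp
    qed
  qed
qed

lemma kostka_diag: "is_partition \<nu> \<Longrightarrow> kostka \<nu> [] \<nu> = 1"
proof -
  assume P: "is_partition \<nu>"
  have "ssytS (Ysh \<nu>) \<nu> = {T0 \<nu>}" using T0_ssyt T0_unique[OF P] by blast
  then show ?thesis unfolding kostka_def ssyt_eq skew_cells_nil by simp
qed

lemma kostka_dom: "is_partition \<nu> \<Longrightarrow> kostka \<nu> [] \<alpha> \<noteq> 0 \<Longrightarrow> sum_list (take k \<alpha>) \<le> sum_list (take k \<nu>)"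
  unfolding kostka_def ssyt_eq skew_cells_nil using kostka_dominance
  by (metis card.empty ex_in_conv)


lemma length_le_sum: "0 \<notin> set xs \<Longrightarrow> length xs \<le> sum_list (xs :: nat list)"
  by (induction xs) auto

lemma finite_partitions: "finite (partitions_of N)"
proof -
  have "partitions_of N \<subseteq> {xs. set xs \<subseteq> {..N} \<and> length xs \<le> N}"
    unfolding partitions_of_def is_partition_def
    using length_le_sum member_le_sum_list by fastforce
  moreover have "finite {xs. set xs \<subseteq> {..N} \<and> length xs \<le> N}"
    by (rule finite_lists_length_le) simp
  ultimately show ?thesis by (rule finite_subset)
qed

lemma is_partition_Cons: "is_partition (x # xs) \<Longrightarrow> is_partition xs"
  unfolding is_partition_def by simp

lemma partition_eq_sums:
  "is_partition xs \<Longrightarrow> is_partition ys \<Longrightarrow> (\<forall>k. sum_list (take k xs) = sum_list (take k ys)) \<Longrightarrow> xs = ys"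
proof (induction xs arbitrary: ys)
  case Nil
  have "sum_list ys = 0" using Nil.prems(3)[rule_format, of "length ys"] by simp
  then show ?case using Nil.prems(2) unfolding is_partition_def by (cases ys) auto
next
  case (Cons x xs)
  have x0: "x \<noteq> 0" using Cons.prems(1) unfolding is_partition_def by auto
  obtain y ys' where ys: "ys = y # ys'"
    using Cons.prems(3)[rule_format, of 1] x0 by (cases ys) auto
  have xy: "x = y" using Cons.prems(3)[rule_format, of 1] ys by simp
  have "\<forall>k. sum_list (take k xs) = sum_list (take k ys')"
  proof
    fix k show "sum_list (take k xs) = sum_list (take k ys')"
      using Cons.prems(3)[rule_format, of "Suc k"] ys xy by simp
  qed
  then have "xs = ys'" using Cons.IH is_partition_Cons Cons.prems ys by blast
  then show ?case using xy ys by simp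
qed

lemma kostka_matrix_inj:
  fixes d :: "nat list \<Rightarrow> int"
  assumes H: "\<forall>\<alpha>. (\<Sum>\<nu>\<in>partitions_of N. d \<nu> * int (kostka \<nu> [] \<alpha>)) = 0"
  shows "\<forall>\<nu>\<in>partitions_of N. d \<nu> = 0"
proof (rule ccontr)
  assume nt: "\<not> (\<forall>\<nu>\<in>partitions_of N. d \<nu> = 0)"
  define P where "P = partitions_of N"
  define Q where "Q = {\<nu> \<in> P. d \<nu> \<noteq> 0}"
  define \<phi> where "\<phi> \<nu> = (\<Sum>k\<le>N. sum_list (take k \<nu>))" for \<nu> :: "nat list"
  have fQ: "finite Q" unfolding Q_def P_def using finite_partitions by simp
  have neQ: "Q \<noteq> {}" using nt unfolding Q_def P_def by blast
  have "Max (\<phi> ` Q) \<in> \<phi> ` Q" using fQ neQ by (intro Max_in) auto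
  then obtain \<nu>0 where n0: "\<nu>0 \<in> Q" and M: "\<phi> \<nu>0 = Max (\<phi> ` Q)" by auto
  have mx: "\<phi> \<nu> \<le> \<phi> \<nu>0" if "\<nu> \<in> Q" for \<nu>
    unfolding M using fQ that by (intro Max_ge) auto
  have P0: "is_partition \<nu>0" "sum_list \<nu>0 = N" using n0 unfolding Q_def P_def partitions_of_def by auto
  have zero: "d \<nu> * int (kostka \<nu> [] \<nu>0) = 0" if "\<nu> \<in> P" "\<nu> \<noteq> \<nu>0" for \<nu>
  proof (rule ccontr)
    assume nz: "d \<nu> * int (kostka \<nu> [] \<nu>0) \<noteq> 0"
    then have nQ: "\<nu> \<in> Q" using that unfolding Q_def by auto
    have Pn: "is_partition \<nu>" "sum_list \<nu> = N" using that unfolding P_def partitions_of_def by auto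
    have K: "kostka \<nu> [] \<nu>0 \<noteq> 0" using nz by auto
    have le: "sum_list (take k \<nu>0) \<le> sum_list (take k \<nu>)" for k using kostka_dom[OF Pn(1) K] .
    have eqk: "sum_list (take k \<nu>0) = sum_list (take k \<nu>)" for k
    proof (cases "k \<le> N")
      case True
      show ?thesis
      proof (rule ccontr)
        assume "sum_list (take k \<nu>0) \<noteq> sum_list (take k \<nu>)"
        then have "sum_list (take k \<nu>0) < sum_list (take k \<nu>)" using le[of k] by simp
        then have "\<phi> \<nu>0 < \<phi> \<nu>" unfolding \<phi>_def
          by (intro sum_strict_mono_ex1) (use le True in auto)
        then show False using mx[OF nQ] by simp
      qed
    next
      case False
      have "length \<nu>0 \<le> N" using length_le_sum[of \<nu>0] P0 unfolding is_partition_def by simp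
      moreover have "length \<nu> \<le> N" using length_le_sum[of \<nu>] Pn unfolding is_partition_def by simp
      ultimately show ?thesis using False P0 Pn by simp
    qed
    then have "\<nu> = \<nu>0" using partition_eq_sums[OF Pn(1) P0(1)] by simp
    then show False using that by simp
  qed
  have "0 = (\<Sum>\<nu>\<in>P. d \<nu> * int (kostka \<nu> [] \<nu>0))" using H unfolding P_def by simp
  also have "\<dots> = d \<nu>0 * int (kostka \<nu>0 [] \<nu>0)"
  proof -
    have fP: "finite P" unfolding P_def by (rule finite_partitions)
    have n0P: "\<nu>0 \<in> P" using n0 unfolding Q_def by simp
    have "(\<Sum>\<nu>\<in>P. d \<nu> * int (kostka \<nu> [] \<nu>0)) = d \<nu>0 * int (kostka \<nu>0 [] \<nu>0) + (\<Sum>\<nu>\<in>P - {\<nu>0}. d \<nu> * int (kostka \<nu> [] \<nu>0))"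
      using sum.remove[OF fP n0P] .
    moreover have "(\<Sum>\<nu>\<in>P - {\<nu>0}. d \<nu> * int (kostka \<nu> [] \<nu>0)) = 0"
      by (rule sum.neutral) (use zero in auto)
    ultimately show ?thesis by simp
  qed
  also have "\<dots> = d \<nu>0" using kostka_diag[OF P0(1)] by simp
  finally show False using n0 unfolding Q_def by simp
qed

lemma lr_coeff_eqI:
  assumes A1: "\<forall>\<nu>. \<nu> \<notin> partitions_of (card (skew_cells lam mu)) \<longrightarrow> c \<nu> = 0"
    and A2: "\<forall>\<alpha>. int (kostka lam mu \<alpha>) = (\<Sum>\<nu>\<in>partitions_of (card (skew_cells lam mu)). c \<nu> * int (kostka \<nu> [] \<alpha>))"
  shows "lr_coeff lam mu = c"
  unfolding lr_coeff_def
proof (rule the_equality)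
  show "(\<forall>\<nu>. \<nu> \<notin> partitions_of (card (skew_cells lam mu)) \<longrightarrow> c \<nu> = 0) \<and>
    (\<forall>\<alpha>. int (kostka lam mu \<alpha>) = (\<Sum>\<nu>\<in>partitions_of (card (skew_cells lam mu)). c \<nu> * int (kostka \<nu> [] \<alpha>)))"
    using A1 A2 by blast
next
  fix c' assume B: "(\<forall>\<nu>. \<nu> \<notin> partitions_of (card (skew_cells lam mu)) \<longrightarrow> c' \<nu> = 0) \<and>
    (\<forall>\<alpha>. int (kostka lam mu \<alpha>) = (\<Sum>\<nu>\<in>partitions_of (card (skew_cells lam mu)). c' \<nu> * int (kostka \<nu> [] \<alpha>)))"
  define N where "N = card (skew_cells lam mu)"
  have "\<forall>\<alpha>. (\<Sum>\<nu>\<in>partitions_of N. (c' \<nu> - c \<nu>) * int (kostka \<nu> [] \<alpha>)) = 0"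
  proof
    fix \<alpha>
    have "(\<Sum>\<nu>\<in>partitions_of N. (c' \<nu> - c \<nu>) * int (kostka \<nu> [] \<alpha>))
        = (\<Sum>\<nu>\<in>partitions_of N. c' \<nu> * int (kostka \<nu> [] \<alpha>)) - (\<Sum>\<nu>\<in>partitions_of N. c \<nu> * int (kostka \<nu> [] \<alpha>))"
      by (simp add: left_diff_distrib sum_subtractf)
    then show "(\<Sum>\<nu>\<in>partitions_of N. (c' \<nu> - c \<nu>) * int (kostka \<nu> [] \<alpha>)) = 0"
      using A2 B unfolding N_def by simp
  qed
  then have "\<forall>\<nu>\<in>partitions_of N. c' \<nu> - c \<nu> = 0" by (rule kostka_matrix_inj)
  then show "c' = c"
  proof -
    assume Z: "\<forall>\<nu>\<in>partitions_of N. c' \<nu> - c \<nu> = 0"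
    show "c' = c"
    proof
      fix \<nu> show "c' \<nu> = c \<nu>"
      proof (cases "\<nu> \<in> partitions_of N")
        case True then show ?thesis using Z by simp
      next
        case False then show ?thesis using A1 B unfolding N_def by simp
      qed
    qed
  qed
qed


lemma nth3: "(p # replicate m q @ rest) ! i = (if i = 0 then p else if i \<le> m then q else rest ! (i - Suc m))"
  by (cases i) (auto simp: nth_append)

lemma nth_rep: "i < r \<Longrightarrow> replicate r v ! i = v" by simp

lemma len_filter_rep: "length (filter P (replicate m q)) = (if P q then m else 0)"
  by (induction m) auto

definition lamL :: "nat \<Rightarrow> nat \<Rightarrow> nat \<Rightarrow> nat \<Rightarrow> nat list" where
  "lamL a x b y = (a + b + 1) # replicate x (a + 1) @ replicate y 1"
definition nuA :: "nat \<Rightarrow> nat \<Rightarrow> nat \<Rightarrow> nat \<Rightarrow> nat list" where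
  "nuA a x b y = (a + b) # replicate x (a + 1) @ replicate y 1"
definition nuB :: "nat \<Rightarrow> nat \<Rightarrow> nat \<Rightarrow> nat \<Rightarrow> nat list" where
  "nuB a x b y = (a + b + 1) # replicate (x - 1) (a + 1) @ a # replicate y 1"
definition nuC :: "nat \<Rightarrow> nat \<Rightarrow> nat \<Rightarrow> nat \<Rightarrow> nat list" where
  "nuC a x b y = (a + b + 1) # replicate x (a + 1) @ replicate (y - 1) 1"
definition rowL :: "nat \<Rightarrow> nat \<Rightarrow> nat \<Rightarrow> nat \<Rightarrow> nat" where
  "rowL a x b i = (if i = 0 then a + b + 1 else if i \<le> x then a + 1 else (1::nat))"

context
  fixes a x b y :: nat
  assumes a1: "1 \<le> a" and x1: "1 \<le> x" and b1: "1 \<le> b" and y1: "1 \<le> y"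
begin

lemma Ysh_lam: "Ysh (lamL a x b y) = {(i, j). i < Suc (x + y) \<and> j < rowL a x b i}"
  unfolding Ysh_def lamL_def rowL_def by (auto simp: nth3 nth_append)

lemma Ysh_nuA: "Ysh (nuA a x b y) = Ysh (lamL a x b y) - {(0, a + b)}"
  unfolding Ysh_lam unfolding Ysh_def nuA_def rowL_def by (auto simp: nth3 nth_append)

lemma Ysh_nuB: "Ysh (nuB a x b y) = Ysh (lamL a x b y) - {(x, a)}"
proof -
  have len: "length (nuB a x b y) = Suc (x + y)" unfolding nuB_def using x1 by simp
  have nb: "(nuB a x b y) ! i = (if i = x then a else rowL a x b i)" if "i < Suc (x + y)" for i
    unfolding nuB_def rowL_def nth3 using x1 that by (auto simp: nth_Cons')
  have rx: "rowL a x b x = a + 1" using x1 by (simp add: rowL_def)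
  show ?thesis
  proof (rule set_eqI)
    fix c :: "nat \<times> nat"
    obtain i j where c: "c = (i, j)" by (cases c)
    show "c \<in> Ysh (nuB a x b y) \<longleftrightarrow> c \<in> Ysh (lamL a x b y) - {(x, a)}"
    proof (cases "i = x")
      case True then show ?thesis unfolding Ysh_lam using c len rx nb[of x] by (auto simp: Ysh_def)
    next
      case False then show ?thesis unfolding Ysh_lam using c len nb[of i] by (auto simp: Ysh_def)
    qed
  qed
qed

lemma Ysh_nuC: "Ysh (nuC a x b y) = Ysh (lamL a x b y) - {(x + y, 0)}"
proof -
  have len: "length (nuC a x b y) = x + y" unfolding nuC_def using y1 by simp
  have nc: "(nuC a x b y) ! i = rowL a x b i" if "i < x + y" for i
    unfolding nuC_def rowL_def nth3 using that by (auto simp: nth_append)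
  have rx: "rowL a x b (x + y) = 1" using y1 by (simp add: rowL_def)
  show ?thesis
  proof (rule set_eqI)
    fix c :: "nat \<times> nat"
    obtain i j where c: "c = (i, j)" by (cases c)
    show "c \<in> Ysh (nuC a x b y) \<longleftrightarrow> c \<in> Ysh (lamL a x b y) - {(x + y, 0)}"
    proof (cases "i = x + y")
      case True then show ?thesis unfolding Ysh_lam using c len rx by (auto simp: Ysh_def)
    next
      case False then show ?thesis unfolding Ysh_lam using c len nc by (auto simp: Ysh_def)
    qed
  qed
qed

lemma corners_lam: "{c. corner (Ysh (lamL a x b y)) c} = {(0, a + b), (x, a), (x + y, 0)}"
  unfolding corner_def Ysh_lam rowL_def using a1 x1 b1 y1 by (auto split: if_splits)

end


lemma srep: "sorted_wrt (\<lambda>x y. y \<le> x) (replicate n (v::nat))"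
  by (induction n) auto

context
  fixes a x b y :: nat
  assumes a1: "1 \<le> a" and x1: "1 \<le> x" and b1: "1 \<le> b" and y1: "1 \<le> y"
begin

lemma part_lam: "is_partition (lamL a x b y)"
  unfolding is_partition_def lamL_def by (auto simp: sorted_wrt_append srep)

lemma part_nuA: "is_partition (nuA a x b y)"
  unfolding is_partition_def nuA_def using b1 by (auto simp: sorted_wrt_append srep)

lemma part_nuB: "is_partition (nuB a x b y)"
  unfolding is_partition_def nuB_def using a1 by (auto simp: sorted_wrt_append srep)

lemma part_nuC: "is_partition (nuC a x b y)"
  unfolding is_partition_def nuC_def by (auto simp: sorted_wrt_append srep)

lemma skew_lam: "skew_cells (lamL a x b y) [1] = Ysh (lamL a x b y) - {(0, 0)}"
  unfolding skew_cells_def Ysh_def by auto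

lemma lam00: "(0, 0) \<in> Ysh (lamL a x b y)"
  unfolding Ysh_lam[OF a1 x1 b1 y1] rowL_def by simp

lemma kostka_id: "kostka (lamL a x b y) [1] \<alpha> = kostka (nuA a x b y) [] \<alpha> + kostka (nuB a x b y) [] \<alpha> + kostka (nuC a x b y) [] \<alpha>"
proof -
  let ?Y = "Ysh (lamL a x b y)"
  have "kostka (lamL a x b y) [1] \<alpha> = card (ssytS (?Y - {(0, 0)}) \<alpha>)"
    unfolding kostka_def ssyt_eq skew_lam ..
  also have "\<dots> = (\<Sum>c\<in>{c. corner ?Y c}. card (ssytS (?Y - {c}) \<alpha>))"
    by (rule jdt_count[OF finite_Ysh partition_dc[OF part_lam] lam00])
  also have "\<dots> = (\<Sum>c\<in>{(0, a + b), (x, a), (x + y, 0)}. card (ssytS (?Y - {c}) \<alpha>))"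
    unfolding corners_lam[OF a1 x1 b1 y1] ..
  also have "\<dots> = card (ssytS (?Y - {(0, a + b)}) \<alpha>) + card (ssytS (?Y - {(x, a)}) \<alpha>) + card (ssytS (?Y - {(x + y, 0)}) \<alpha>)"
    using x1 y1 by simp
  also have "\<dots> = kostka (nuA a x b y) [] \<alpha> + kostka (nuB a x b y) [] \<alpha> + kostka (nuC a x b y) [] \<alpha>"
    unfolding kostka_def ssyt_eq skew_cells_nil Ysh_nuA[OF a1 x1 b1 y1] Ysh_nuB[OF a1 x1 b1 y1] Ysh_nuC[OF a1 x1 b1 y1] ..
  finally show ?thesis .
qed

lemma distinct_nus: "nuA a x b y \<noteq> nuB a x b y" "nuA a x b y \<noteq> nuC a x b y" "nuB a x b y \<noteq> nuC a x b y"
proof -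
  show "nuA a x b y \<noteq> nuB a x b y" unfolding nuA_def nuB_def by simp
  show "nuA a x b y \<noteq> nuC a x b y" unfolding nuA_def nuC_def by simp
  have "length (nuB a x b y) \<noteq> length (nuC a x b y)" unfolding nuB_def nuC_def using x1 y1 by simp
  then show "nuB a x b y \<noteq> nuC a x b y" by metis
qed

definition "cN = card (skew_cells (lamL a x b y) [1])"

lemma nus_in: "{nuA a x b y, nuB a x b y, nuC a x b y} \<subseteq> partitions_of cN"
proof -
  let ?Y = "Ysh (lamL a x b y)"
  have N: "cN = card ?Y - 1" unfolding cN_def skew_lam using lam00 finite_Ysh by (simp add: card_Diff_singleton)
  have "sum_list (nuA a x b y) = cN" unfolding N card_Ysh[symmetric] Ysh_nuA[OF a1 x1 b1 y1]
    using finite_Ysh corners_lam[OF a1 x1 b1 y1] unfolding corner_def by (subst card_Diff_singleton) auto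
  moreover have "sum_list (nuB a x b y) = cN" unfolding N card_Ysh[symmetric] Ysh_nuB[OF a1 x1 b1 y1]
    using finite_Ysh corners_lam[OF a1 x1 b1 y1] unfolding corner_def by (subst card_Diff_singleton) auto
  moreover have "sum_list (nuC a x b y) = cN" unfolding N card_Ysh[symmetric] Ysh_nuC[OF a1 x1 b1 y1]
    using finite_Ysh corners_lam[OF a1 x1 b1 y1] unfolding corner_def by (subst card_Diff_singleton) auto
  ultimately show ?thesis unfolding partitions_of_def using part_nuA part_nuB part_nuC by auto
qed

lemma lr_lam: "lr_coeff (lamL a x b y) [1] = (\<lambda>\<nu>. if \<nu> \<in> {nuA a x b y, nuB a x b y, nuC a x b y} then 1 else 0)"
proof (rule lr_coeff_eqI)
  let ?S = "{nuA a x b y, nuB a x b y, nuC a x b y}"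
  show "\<forall>\<nu>. \<nu> \<notin> partitions_of (card (skew_cells (lamL a x b y) [1])) \<longrightarrow> (if \<nu> \<in> ?S then 1 else 0) = (0::int)"
    using nus_in unfolding cN_def by auto
  show "\<forall>\<alpha>. int (kostka (lamL a x b y) [1] \<alpha>) = (\<Sum>\<nu>\<in>partitions_of (card (skew_cells (lamL a x b y) [1])). (if \<nu> \<in> ?S then 1 else 0) * int (kostka \<nu> [] \<alpha>))"
  proof
    fix \<alpha>
    have "(\<Sum>\<nu>\<in>partitions_of cN. (if \<nu> \<in> ?S then 1 else 0) * int (kostka \<nu> [] \<alpha>))
        = (\<Sum>\<nu>\<in>partitions_of cN. if \<nu> \<in> ?S then int (kostka \<nu> [] \<alpha>) else 0)"
      by (rule sum.cong) auto
    also have "\<dots> = (\<Sum>\<nu>\<in>partitions_of cN \<inter> ?S. int (kostka \<nu> [] \<alpha>))"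
      by (rule sum.inter_restrict[symmetric]) (rule finite_partitions)
    also have "partitions_of cN \<inter> ?S = ?S" using nus_in by blast
    also have "(\<Sum>\<nu>\<in>?S. int (kostka \<nu> [] \<alpha>)) = int (kostka (nuA a x b y) [] \<alpha>) + int (kostka (nuB a x b y) [] \<alpha>) + int (kostka (nuC a x b y) [] \<alpha>)"
      using distinct_nus by simp
    finally show "int (kostka (lamL a x b y) [1] \<alpha>) = (\<Sum>\<nu>\<in>partitions_of (card (skew_cells (lamL a x b y) [1])). (if \<nu> \<in> ?S then 1 else 0) * int (kostka \<nu> [] \<alpha>))"
      unfolding cN_def kostka_id by simp
  qed
qed

lemma supp_lam: "skew_supp (lamL a x b y) [1] = {conj_part (nuA a x b y), conj_part (nuB a x b y), conj_part (nuC a x b y)}"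
proof -
  have "{\<nu>. is_partition \<nu> \<and> (0::int) < (if \<nu> \<in> {nuA a x b y, nuB a x b y, nuC a x b y} then 1 else 0)} = {nuA a x b y, nuB a x b y, nuC a x b y}"
    using part_nuA part_nuB part_nuC by auto
  then have "skew_supp (lamL a x b y) [1] = conj_part ` {nuA a x b y, nuB a x b y, nuC a x b y}"
    unfolding skew_supp_def lr_lam by (simp add: setcompr_eq_image)
  then show ?thesis by simp
qed

end


lemma lf3: "length (filter (\<lambda>p. j < p) (p0 # replicate m q @ rest)) =
   (if j < p0 then 1 else 0) + (if j < q then m else 0) + length (filter (\<lambda>p. j < p) rest)"
  by (simp add: len_filter_rep)

lemma lf_rep: "length (filter (\<lambda>p. j < p) (replicate m q)) = (if j < q then m else 0)"
  by (simp add: len_filter_rep)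

lemma conj_eqI:
  assumes "\<nu> \<noteq> []" "length t = hd \<nu>" "\<And>j. j < hd \<nu> \<Longrightarrow> length (filter (\<lambda>p. j < p) \<nu>) = t ! j"
  shows "conj_part \<nu> = t"
  unfolding conj_part_def using assms by (intro nth_equalityI) auto

context
  fixes a x b y :: nat
  assumes a1: "1 \<le> a" and x1: "1 \<le> x" and b1: "1 \<le> b" and y1: "1 \<le> y"
begin

lemma conj_nuA: "conj_part (nuA a x b y) = (x + y + 1) # replicate a (x + 1) @ replicate (b - 1) 1"
proof (rule conj_eqI)
  show "nuA a x b y \<noteq> []" unfolding nuA_def by simp
  show "length ((x + y + 1) # replicate a (x + 1) @ replicate (b - 1) 1) = hd (nuA a x b y)"
    unfolding nuA_def using b1 by simp
  fix j assume j: "j < hd (nuA a x b y)"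
  then have j': "j < a + b" unfolding nuA_def by simp
  show "length (filter (\<lambda>p. j < p) (nuA a x b y)) = ((x + y + 1) # replicate a (x + 1) @ replicate (b - 1) 1) ! j"
    unfolding nuA_def lf3 lf_rep nth3 using j' by (auto simp: nth_append)
qed

lemma conj_nuB: "conj_part (nuB a x b y) = (x + y + 1) # replicate (a - 1) (x + 1) @ x # replicate b 1"
proof (rule conj_eqI)
  show "nuB a x b y \<noteq> []" unfolding nuB_def by simp
  show "length ((x + y + 1) # replicate (a - 1) (x + 1) @ x # replicate b 1) = hd (nuB a x b y)"
    unfolding nuB_def using a1 by simp
  fix j assume j: "j < hd (nuB a x b y)"
  then have j': "j < a + b + 1" unfolding nuB_def by simp
  show "length (filter (\<lambda>p. j < p) (nuB a x b y)) = ((x + y + 1) # replicate (a - 1) (x + 1) @ x # replicate b 1) ! j"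
    unfolding nuB_def lf3 lf_rep nth3 using j' a1 x1 by (auto simp: nth_append nth_Cons')
qed

lemma conj_nuC: "conj_part (nuC a x b y) = (x + y) # replicate a (x + 1) @ replicate b 1"
proof (rule conj_eqI)
  show "nuC a x b y \<noteq> []" unfolding nuC_def by simp
  show "length ((x + y) # replicate a (x + 1) @ replicate b 1) = hd (nuC a x b y)"
    unfolding nuC_def by simp
  fix j assume j: "j < hd (nuC a x b y)"
  then have j': "j < a + b + 1" unfolding nuC_def by simp
  show "length (filter (\<lambda>p. j < p) (nuC a x b y)) = ((x + y) # replicate a (x + 1) @ replicate b 1) ! j"
    unfolding nuC_def lf3 lf_rep nth3 using j' y1 by (auto simp: nth_append)
qed

end


lemma sort_desc_id: "sorted_wrt (\<lambda>x y. y \<le> x) xs \<Longrightarrow> sort_desc xs = xs"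
proof -
  assume s: "sorted_wrt (\<lambda>x y. y \<le> x) xs"
  have "sorted (rev xs)" using s by (simp add: sorted_wrt_rev)
  then have "sort xs = rev xs" by (intro properties_for_sort) simp_all
  then show ?thesis unfolding sort_desc_def by simp
qed

context
  fixes a x b y :: nat
  assumes a1: "1 \<le> a" and x1: "1 \<le> x" and b1: "1 \<le> b" and y1: "1 \<le> y"
begin

lemma hd_lam: "hd (lamL a x b y) = a + b + 1" "lamL a x b y \<noteq> []" unfolding lamL_def by simp_all

lemma colcnt: "j < a + b + 1 \<Longrightarrow> card {i. (i, j) \<in> skew_cells (lamL a x b y) [1]} = ((x + y) # replicate a (x + 1) @ replicate b 1) ! j"
proof -
  assume j: "j < a + b + 1"
  have S: "{i. (i, j) \<in> skew_cells (lamL a x b y) [1]} = {i. i < Suc (x + y) \<and> j < rowL a x b i \<and> (i, j) \<noteq> (0, 0)}"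
    unfolding skew_lam[OF a1 x1 b1 y1] Ysh_lam[OF a1 x1 b1 y1] by auto
  show ?thesis
  proof (cases "j = 0")
    case True
    have "{i. i < Suc (x + y) \<and> j < rowL a x b i \<and> (i, j) \<noteq> (0, 0)} = {1..x + y}"
      using True by (auto simp: rowL_def)
    then show ?thesis unfolding S using True by simp
  next
    case False
    show ?thesis
    proof (cases "j \<le> a")
      case True
      have "{i. i < Suc (x + y) \<and> j < rowL a x b i \<and> (i, j) \<noteq> (0, 0)} = {..x}"
        using True False by (auto simp: rowL_def)
      then show ?thesis unfolding S using True False by (simp add: nth3)
    next
      case F2: False
      have "{i. i < Suc (x + y) \<and> j < rowL a x b i \<and> (i, j) \<noteq> (0, 0)} = {0}"
        using F2 False j by (auto simp: rowL_def)
      then show ?thesis unfolding S using F2 False j by (simp add: nth3 nth_append)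
    qed
  qed
qed

lemma skew_w_lam: "skew_w (lamL a x b y) [1] = (x + y) # replicate a (x + 1) @ replicate b 1"
proof -
  have m: "map (\<lambda>j. card {i. (i, j) \<in> skew_cells (lamL a x b y) [1]}) [0..<a + b + 1] = (x + y) # replicate a (x + 1) @ replicate b 1"
  proof (rule nth_equalityI)
    fix j assume "j < length (map (\<lambda>j. card {i. (i, j) \<in> skew_cells (lamL a x b y) [1]}) [0..<a + b + 1])"
    then have j: "j < a + b + 1" by simp
    show "map (\<lambda>j. card {i. (i, j) \<in> skew_cells (lamL a x b y) [1]}) [0..<a + b + 1] ! j = ((x + y) # replicate a (x + 1) @ replicate b 1) ! j"
      using nth_map_upt[of j "a + b + 1" 0] j colcnt[OF j] by (simp del: upt_Suc)
  qed simp
  have f: "filter (\<lambda>l. 0 < l) ((x + y) # replicate a (x + 1) @ replicate b (1::nat)) = (x + y) # replicate a (x + 1) @ replicate b 1"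
    using x1 by (auto intro!: filter_True)
  have s: "sorted_wrt (\<lambda>x y. y \<le> x) ((x + y) # replicate a (x + 1) @ replicate b (1::nat))"
    using y1 by (auto simp: sorted_wrt_append srep)
  have e: "(if lamL a x b y = [] then 0 else hd (lamL a x b y)) = a + b + 1" using hd_lam by simp
  show ?thesis unfolding skew_w_def e m f using sort_desc_id[OF s] by simp
qed

lemma rowcnt: "i < length (lamL a x b y) \<Longrightarrow> card {j. (i, j) \<in> skew_cells (lamL a x b y) [1]} = nuA a x b y ! i"
proof -
  assume i: "i < length (lamL a x b y)"
  then have i': "i < Suc (x + y)" unfolding lamL_def by simp
  have S: "{j. (i, j) \<in> skew_cells (lamL a x b y) [1]} = {j. j < rowL a x b i \<and> (i, j) \<noteq> (0, 0)}"
    unfolding skew_lam[OF a1 x1 b1 y1] Ysh_lam[OF a1 x1 b1 y1] using i' by auto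
  show ?thesis
  proof (cases "i = 0")
    case True
    have "{j. j < rowL a x b i \<and> (i, j) \<noteq> (0, 0)} = {1..a + b}" using True by (auto simp: rowL_def)
    then show ?thesis unfolding S nuA_def using True by simp
  next
    case False
    have "{j. j < rowL a x b i \<and> (i, j) \<noteq> (0, 0)} = {..<rowL a x b i}" using False by auto
    then show ?thesis unfolding S nuA_def using False i' by (auto simp: rowL_def nth3 nth_append)
  qed
qed

lemma skew_n_lam: "skew_n (lamL a x b y) [1] = conj_part (nuA a x b y)"
proof -
  have m: "map (\<lambda>i. card {j. (i, j) \<in> skew_cells (lamL a x b y) [1]}) [0..<length (lamL a x b y)] = nuA a x b y"
  proof (rule nth_equalityI)
    show "length (map (\<lambda>i. card {j. (i, j) \<in> skew_cells (lamL a x b y) [1]}) [0..<length (lamL a x b y)]) = length (nuA a x b y)"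
      unfolding lamL_def nuA_def by simp
    fix i assume "i < length (map (\<lambda>i. card {j. (i, j) \<in> skew_cells (lamL a x b y) [1]}) [0..<length (lamL a x b y)])"
    then have i: "i < length (lamL a x b y)" by simp
    show "map (\<lambda>i. card {j. (i, j) \<in> skew_cells (lamL a x b y) [1]}) [0..<length (lamL a x b y)] ! i = nuA a x b y ! i"
      using nth_map_upt[of i "length (lamL a x b y)" 0] i rowcnt[OF i] by (simp del: upt_Suc)
  qed
  have "\<forall>l\<in>set (nuA a x b y). 0 < l"
    using part_nuA[OF a1 x1 b1 y1] unfolding is_partition_def by (metis gr0I)
  then have f: "filter (\<lambda>l. 0 < l) (nuA a x b y) = nuA a x b y" by (rule filter_True)
  have s: "sorted_wrt (\<lambda>x y. y \<le> x) (nuA a x b y)"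
    using part_nuA[OF a1 x1 b1 y1] unfolding is_partition_def by simp
  show ?thesis unfolding skew_n_def m f sort_desc_id[OF s] ..
qed

end


lemma sum_zero_list: "0 \<notin> set (l :: nat list) \<Longrightarrow> sum_list l = 0 \<Longrightarrow> l = []"
  by (cases l) auto

lemma sum_one_list: "0 \<notin> set (l :: nat list) \<Longrightarrow> sum_list l = 1 \<Longrightarrow> l = [1]"
proof (cases l)
  case (Cons h t)
  assume "0 \<notin> set l" "sum_list l = 1"
  then have h0: "0 < h" "0 \<notin> set t" "h + sum_list t = 1" using Cons by auto
  then have h1: "h = 1" "sum_list t = 0" by arith+
  then have "t = []" using sum_zero_list[OF h0(2)] by simp
  then show ?thesis using Cons h1 by simp
qed simp

lemma stake_Suc: "k < length \<nu> \<Longrightarrow> sum_list (take (Suc k) \<nu>) = sum_list (take k \<nu>) + (\<nu> ! k :: nat)"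
  by (simp add: take_Suc_conv_app_nth)

lemma enum:
  fixes X A :: nat
  assumes X: "2 \<le> X" and A: "2 \<le> A" and P: "is_partition \<nu>"
    and sumN: "sum_list \<nu> = A * X + 1"
    and lo: "\<And>k. k \<le> A \<Longrightarrow> k * X \<le> sum_list (take k \<nu>)"
    and hi: "\<And>k. 1 \<le> k \<Longrightarrow> k \<le> A \<Longrightarrow> sum_list (take k \<nu>) \<le> k * X + 1"
  shows "\<nu> = replicate A X @ [1] \<or> \<nu> = (X + 1) # replicate (A - 2) X @ [X - 1, 1] \<or> \<nu> = (X + 1) # replicate (A - 1) X"
proof -
  define s where "s k = sum_list (take k \<nu>)" for k
  define A' where "A' = A - 2"
  have AA: "A = A' + 2" using A unfolding A'_def by simp
  define L where "L = length \<nu>"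
  have pos: "1 \<le> \<nu> ! i" if "i < L" for i
    using P that unfolding is_partition_def L_def by (metis less_one not_le nth_mem)
  have srt: "\<nu> ! j \<le> \<nu> ! i" if "i \<le> j" "j < L" for i j
  proof (cases "i = j")
    case False
    then show ?thesis using P that unfolding is_partition_def L_def by (simp add: sorted_wrt_iff_nth_less)
  qed simp
  have sst: "s (Suc k) = s k + \<nu> ! k" if "k < L" for k
    unfolding s_def using stake_Suc that unfolding L_def by simp
  have sL: "s k = A * X + 1" if "L \<le> k" for k
    unfolding s_def using that sumN unfolding L_def by simp
  have LA: "A \<le> L"
  proof (rule ccontr)
    assume "\<not> A \<le> L"
    then have LA': "L < A" by simp
    have "L \<noteq> 0" using sumN unfolding L_def by auto
    then have "s L \<le> L * X + 1" unfolding s_def using hi[of L] LA' by simp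
    then have "A * X \<le> L * X" using sL[of L] by simp
    then have "A \<le> L" using X by simp
    then show False using LA' by simp
  qed
  have s0: "s 0 = 0" unfolding s_def by simp
  have n0: "\<nu> ! 0 = s 1" using sst[of 0] s0 LA A by simp
  have s1: "X \<le> s 1" "s 1 \<le> X + 1" using lo[of 1] hi[of 1] A unfolding s_def by auto
  have dropsum: "sum_list (drop A \<nu>) = A * X + 1 - s A"
    using sumN unfolding s_def by (metis add_diff_cancel_left' append_take_drop_id sum_list_append)
  have drop_pos: "0 \<notin> set (drop A \<nu>)" using P unfolding is_partition_def by (meson in_set_dropD)
  have split: "\<nu> = take A \<nu> @ drop A \<nu>" by simp
  have ltake: "length (take A \<nu>) = A" using LA unfolding L_def by simp
  show ?thesis
  proof (cases "s 1 = X")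
    case True
    have le: "\<nu> ! i \<le> X" if "i < L" for i using srt[of 0 i] that n0 True by simp
    have sk: "s k = k * X" if "k \<le> A" for k
    proof -
      have "s k \<le> k * X" using that
      proof (induction k)
        case 0 then show ?case using s0 by simp
      next
        case (Suc k)
        then have "k < L" using LA by simp
        then show ?case using sst[of k] le[of k] Suc by simp
      qed
      then show ?thesis using lo[OF that] unfolding s_def by simp
    qed
    have tk: "take A \<nu> = replicate A X"
    proof (rule nth_equalityI)
      show "length (take A \<nu>) = length (replicate A X)" using ltake by simp
      fix i assume "i < length (take A \<nu>)"
      then have i: "i < A" using ltake by simp
      have "s (Suc i) = s i + \<nu> ! i" using sst[of i] i LA by simp
      then have "\<nu> ! i = X" using sk[of i] sk[of "Suc i"] i by simp
      then show "take A \<nu> ! i = replicate A X ! i" using i by simp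
    qed
    have "drop A \<nu> = [1]" using dropsum sk[of A] drop_pos sum_one_list by simp
    then have "\<nu> = replicate A X @ [1]" using split tk by simp
    then show ?thesis by simp
  next
    case False
    then have s1': "s 1 = X + 1" using s1 by simp
    have n1: "\<nu> ! 1 \<le> X" using sst[of 1] s1' hi[of 2] A LA unfolding s_def by (simp add: numeral_2_eq_2)
    have le: "\<nu> ! i \<le> X" if "1 \<le> i" "i < L" for i using srt[of 1 i] that n1 by simp
    have mid: "\<nu> ! k = X" if "1 \<le> k" "k \<le> A - 2" for k
    proof (rule ccontr)
      assume "\<nu> ! k \<noteq> X"
      moreover have "k < L" using that LA A by simp
      ultimately have a: "\<nu> ! k < X" using le[of k] that by simp
      have "Suc k < L" using that LA A by arith
      then have b: "\<nu> ! Suc k < X" using srt[of k "Suc k"] a by simp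
      have "s (Suc (Suc k)) = s k + \<nu> ! k + \<nu> ! Suc k" using sst[of k] sst[of "Suc k"] that LA A by simp
      moreover have "s k \<le> k * X + 1" using hi[of k] that A unfolding s_def by simp
      moreover have "Suc (Suc k) * X \<le> s (Suc (Suc k))" using lo[of "Suc (Suc k)"] that A unfolding s_def by simp
      ultimately show False using a b by simp
    qed
    have sk: "s (Suc k) = X + 1 + k * X" if "k \<le> A - 2" for k
      using that
    proof (induction k)
      case 0 then show ?case using s1' by simp
    next
      case (Suc k)
      then have "Suc k < L" using LA A by simp
      then show ?case using sst[of "Suc k"] mid[of "Suc k"] Suc by simp
    qed
    have sA1: "s (A - 1) = X + 1 + (A - 2) * X" using sk[of "A - 2"] A by (simp add: Suc_diff_Suc numeral_2_eq_2)
    have last: "s A = s (A - 1) + \<nu> ! (A - 1)" using sst[of "A - 1"] A LA by (simp add: numeral_2_eq_2)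
    have lastlo: "X - 1 \<le> \<nu> ! (A - 1)"
    proof -
      have "A * X \<le> s A" using lo[of A] unfolding s_def by simp
      moreover have "A * X = X + (A - 2) * X + X" using AA by (simp add: algebra_simps)
      ultimately show ?thesis using last sA1 by simp
    qed
    have lasthi: "\<nu> ! (A - 1) \<le> X" using le[of "A - 1"] A LA by simp
    have AX: "A * X = X + (A - 2) * X + X" using AA by (simp add: algebra_simps)
    show ?thesis
    proof (cases "\<nu> ! (A - 1) = X")
      case True
      have tk: "take A \<nu> = (X + 1) # replicate (A - 1) X"
      proof (rule nth_equalityI)
        show "length (take A \<nu>) = length ((X + 1) # replicate (A - 1) X)" using ltake A by simp
        fix i assume "i < length (take A \<nu>)"
        then have i: "i < A" using ltake by simp
        show "take A \<nu> ! i = ((X + 1) # replicate (A - 1) X) ! i"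
        proof (cases "i = 0")
          case True then show ?thesis using n0 s1' i by simp
        next
          case False
          then have "\<nu> ! i = X" using mid[of i] True i by (cases "i = A - 1") auto
          then show ?thesis using i False by (simp add: nth_Cons')
        qed
      qed
      have "s A = A * X + 1" using last sA1 True AX by simp
      then have "sum_list (drop A \<nu>) = 0" using dropsum by simp
      then have "drop A \<nu> = []" using drop_pos sum_zero_list by blast
      then have "\<nu> = (X + 1) # replicate (A - 1) X" using split tk by simp
      then show ?thesis by simp
    next
      case False
      then have nl: "\<nu> ! (A - 1) = X - 1" using lastlo lasthi by simp
      have tk: "take A \<nu> = (X + 1) # replicate (A - 2) X @ [X - 1]"
      proof (rule nth_equalityI)
        show "length (take A \<nu>) = length ((X + 1) # replicate (A - 2) X @ [X - 1])" using ltake A by simp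
        fix i assume "i < length (take A \<nu>)"
        then have i: "i < A" using ltake by simp
        show "take A \<nu> ! i = ((X + 1) # replicate (A - 2) X @ [X - 1]) ! i"
        proof (cases "i = 0")
          case True then show ?thesis using n0 s1' i by simp
        next
          case F2: False
          show ?thesis
          proof (cases "i = A - 1")
            case True then show ?thesis using nl i AA by (simp add: nth3 nth_append)
          next
            case False
            then have "\<nu> ! i = X" using mid[of i] F2 i by simp
            then show ?thesis using i F2 False AA by (simp add: nth3)
          qed
        qed
      qed
      have "s A = A * X" using last sA1 nl AX X by simp
      then have "drop A \<nu> = [1]" using dropsum drop_pos sum_one_list by simp
      then have "\<nu> = (X + 1) # replicate (A - 2) X @ [X - 1, 1]" using split tk by simp
      then show ?thesis by simp
    qed
  qed
qed


lemma dom_gen: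
  assumes m: "length pu = length pv"
    and p: "\<forall>k \<le> length pu. sum_list (take k pu) \<le> sum_list (take k pv)"
    and t: "\<forall>i. sum_list pu + sum_list (take i s) \<le> sum_list pv + sum_list (take i t)"
  shows "sum_list (take k (pu @ R @ s)) \<le> sum_list (take k (pv @ R @ (t :: nat list)))"
proof (cases "k \<le> length pu")
  case True
  then show ?thesis using p m by simp
next
  case False
  define j where "j = k - length pu"
  have "sum_list (take k (pu @ R @ s)) = sum_list pu + sum_list (take j R) + sum_list (take (j - length R) s)"
    using False unfolding j_def by simp
  moreover have "sum_list (take k (pv @ R @ t)) = sum_list pv + sum_list (take j R) + sum_list (take (j - length R) t)"
    using False m unfolding j_def by simp
  ultimately show ?thesis using t[rule_format, of "j - length R"] by simp
qed

lemma rep_shift: "replicate (Suc n) v @ l = replicate n v @ (v # l)"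
  by (induction n) auto

lemma dominates_refl: "dominates_le u u"
  unfolding dominates_le_def by simp

lemma stake_cons: "sum_list (take i (h # l)) = (if i = 0 then 0 else h + sum_list (take (i - 1) l))"
  by (cases i) auto

lemma sum_take_rep1: "sum_list (take i (replicate m (1::nat))) = min i m"
  by (simp add: sum_list_replicate)

context
  fixes a x b y :: nat
  assumes a1: "1 \<le> a" and x1: "1 \<le> x" and b1: "1 \<le> b" and y1: "1 \<le> y"
begin

lemma wit_b2:
  assumes b2: "2 \<le> b"
  defines "w \<equiv> (x + y) # replicate a (x + 1) @ replicate b (1::nat)"
    and "n \<equiv> (x + y + 1) # replicate a (x + 1) @ replicate (b - 1) (1::nat)"
    and "v \<equiv> (x + y) # replicate a (x + 1) @ 2 # replicate (b - 2) (1::nat)"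
  shows "v \<in> dom_interval w n" "v \<noteq> (x + y + 1) # replicate a (x + 1) @ replicate (b - 1) 1"
    "v \<noteq> (x + y + 1) # replicate (a - 1) (x + 1) @ x # replicate b 1"
    "v \<noteq> (x + y) # replicate a (x + 1) @ replicate b 1"
proof -
  obtain b' where bb: "b = Suc (Suc b')" using b2 by (metis add_2_eq_Suc le_Suc_ex)
  have P: "is_partition v" unfolding v_def is_partition_def using x1 y1 by (auto simp: sorted_wrt_append srep)
  have wf: "w = [x + y] @ replicate a (x + 1) @ replicate b 1" unfolding w_def by simp
  have vf: "v = [x + y] @ replicate a (x + 1) @ (2 # replicate (b - 2) 1)" unfolding v_def by simp
  have nf: "n = [x + y + 1] @ replicate a (x + 1) @ replicate (b - 1) 1" unfolding n_def by simp
  have t1: "\<forall>i. sum_list [x + y] + sum_list (take i (replicate b 1)) \<le> sum_list [x + y] + sum_list (take i (2 # replicate (b - 2) (1::nat)))"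
    using b2 by (intro allI) (simp add: stake_cons sum_list_replicate min_def; arith)
  have t2: "\<forall>i. sum_list [x + y] + sum_list (take i (2 # replicate (b - 2) (1::nat))) \<le> sum_list [x + y + 1] + sum_list (take i (replicate (b - 1) 1))"
    using b2 by (intro allI) (simp add: stake_cons sum_list_replicate min_def; arith)
  have "sum_list (take k w) \<le> sum_list (take k v)" for k
    unfolding wf vf by (rule dom_gen[OF _ _ t1]) (auto simp: take_Cons')
  moreover have "sum_list w = sum_list v" unfolding w_def v_def bb by (simp add: sum_list_replicate)
  ultimately have D1: "dominates_le w v" unfolding dominates_le_def by simp
  have "sum_list (take k v) \<le> sum_list (take k n)" for k
    unfolding nf vf by (rule dom_gen[OF _ _ t2]) (auto simp: take_Cons' le_Suc_eq)
  moreover have "sum_list v = sum_list n" unfolding n_def v_def bb by (simp add: sum_list_replicate)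
  ultimately have D2: "dominates_le v n" unfolding dominates_le_def by simp
  show "v \<in> dom_interval w n" unfolding dom_interval_def using P D1 D2 by simp
  show "v \<noteq> (x + y + 1) # replicate a (x + 1) @ replicate (b - 1) 1" unfolding v_def by simp
  show "v \<noteq> (x + y + 1) # replicate (a - 1) (x + 1) @ x # replicate b 1" unfolding v_def by simp
  show "v \<noteq> (x + y) # replicate a (x + 1) @ replicate b 1" unfolding v_def bb by simp
qed

lemma wit_y2:
  assumes y2: "2 \<le> y" and b: "b = 1"
  defines "w \<equiv> (x + y) # replicate a (x + 1) @ replicate b (1::nat)"
    and "n \<equiv> (x + y + 1) # replicate a (x + 1) @ replicate (b - 1) (1::nat)"
    and "v \<equiv> (x + y) # (x + 2) # replicate (a - 1) (x + 1)"
  shows "v \<in> dom_interval w n" "v \<noteq> (x + y + 1) # replicate a (x + 1) @ replicate (b - 1) 1"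
    "v \<noteq> (x + y + 1) # replicate (a - 1) (x + 1) @ x # replicate b 1"
    "v \<noteq> (x + y) # replicate a (x + 1) @ replicate b 1"
proof -
  obtain a' where aa: "a = Suc a'" using a1 by (cases a) auto
  have wf: "w = [x + y, x + 1] @ replicate a' (x + 1) @ [1]" unfolding w_def aa b by simp
  have nf: "n = [x + y + 1, x + 1] @ replicate a' (x + 1) @ []" unfolding n_def aa b by simp
  have vf: "v = [x + y, x + 2] @ replicate a' (x + 1) @ []" unfolding v_def aa by simp
  have P: "is_partition v" unfolding v_def is_partition_def using y2 by (auto simp: sorted_wrt_append srep)
  have "sum_list (take k w) \<le> sum_list (take k v)" for k
    unfolding wf vf by (rule dom_gen) (auto simp: take_Cons' le_Suc_eq numeral_2_eq_2)
  moreover have "sum_list w = sum_list v" unfolding wf vf by simp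
  ultimately have D1: "dominates_le w v" unfolding dominates_le_def by simp
  have "sum_list (take k v) \<le> sum_list (take k n)" for k
    unfolding nf vf by (rule dom_gen) (auto simp: take_Cons' le_Suc_eq numeral_2_eq_2)
  moreover have "sum_list v = sum_list n" unfolding nf vf by simp
  ultimately have D2: "dominates_le v n" unfolding dominates_le_def by simp
  show "v \<in> dom_interval w n" unfolding dom_interval_def using P D1 D2 by simp
  show "v \<noteq> (x + y + 1) # replicate a (x + 1) @ replicate (b - 1) 1" unfolding v_def by simp
  show "v \<noteq> (x + y + 1) # replicate (a - 1) (x + 1) @ x # replicate b 1" unfolding v_def by simp
  show "v \<noteq> (x + y) # replicate a (x + 1) @ replicate b 1" unfolding v_def aa b by simp
qed

end


context
  fixes a x :: nat
  assumes a1: "1 \<le> a" and x1: "1 \<le> x"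
begin

lemma interval11:
  "dom_interval ((x + 1) # replicate a (x + 1) @ replicate 1 1) ((x + 1 + 1) # replicate a (x + 1) @ replicate (1 - 1) 1)
   = {replicate (a + 1) (x + 1) @ [1], (x + 2) # replicate (a - 1) (x + 1) @ [x, 1], (x + 2) # replicate a (x + 1)}"
  (is "dom_interval ?w ?n = {?x1, ?x2, ?x3}")
proof -
  obtain a' where aa: "a = Suc a'" using a1 by (cases a) auto
  have w1: "?w = replicate (a + 1) (x + 1) @ [1]" by simp
  have n1: "?n = (x + 2) # replicate a (x + 1)" by simp
  have wf: "?w = [x + 1] @ replicate a' (x + 1) @ [x + 1, 1]" unfolding aa by (simp add: rep_shift replicate_append_same)
  have nf: "?n = [x + 2] @ replicate a' (x + 1) @ [x + 1]" unfolding aa by (simp add: rep_shift replicate_append_same)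
  have x2f: "?x2 = [x + 2] @ replicate a' (x + 1) @ [x, 1]" unfolding aa by simp
  have Sw: "sum_list (take k ?w) = k * (x + 1)" if "k \<le> a + 1" for k
  proof -
    have "take k (replicate (a + 1) (x + 1) @ [1]) = replicate k (x + 1)"
      using that by (simp del: replicate_Suc add: take_append)
    then show ?thesis unfolding w1 by (simp del: replicate_Suc add: sum_list_replicate)
  qed
  have Sn: "sum_list (take k ?n) = k * (x + 1) + 1" if k1: "1 \<le> k" and k2: "k \<le> a + 1" for k
  proof -
    obtain k' where kk: "k = Suc k'" using k1 by (cases k) auto
    then show ?thesis unfolding n1 using k2 by (simp add: sum_list_replicate)
  qed
  have sumw: "sum_list ?w = (a + 1) * (x + 1) + 1" by (simp add: sum_list_replicate)
  have P1: "is_partition ?x1" unfolding is_partition_def by (auto simp: sorted_wrt_append srep)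
  have P2: "is_partition ?x2" unfolding is_partition_def using x1 by (auto simp: sorted_wrt_append srep)
  have P3: "is_partition ?x3" unfolding is_partition_def by (auto simp: sorted_wrt_append srep)
  have Dwn: "dominates_le ?w ?n"
  proof -
    have "sum_list (take k ?w) \<le> sum_list (take k ?n)" for k
      unfolding wf nf by (rule dom_gen) (auto simp: stake_cons)
    moreover have "sum_list ?w = sum_list ?n" by (simp add: sum_list_replicate)
    ultimately show ?thesis unfolding dominates_le_def by simp
  qed
  have Dw2: "dominates_le ?w ?x2"
  proof -
    have "sum_list (take k ?w) \<le> sum_list (take k ?x2)" for k
      unfolding wf x2f by (rule dom_gen) (auto simp: stake_cons)
    moreover have "sum_list ?w = sum_list ?x2" unfolding wf x2f by simp
    ultimately show ?thesis unfolding dominates_le_def by simp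
  qed
  have D2n: "dominates_le ?x2 ?n"
  proof -
    have "sum_list (take k ?x2) \<le> sum_list (take k ?n)" for k
      unfolding nf x2f by (rule dom_gen) (auto simp: stake_cons)
    moreover have "sum_list ?x2 = sum_list ?n" unfolding nf x2f by simp
    ultimately show ?thesis unfolding dominates_le_def by simp
  qed
  show ?thesis
  proof
    show "{?x1, ?x2, ?x3} \<subseteq> dom_interval ?w ?n"
      unfolding dom_interval_def using P1 P2 P3 Dwn Dw2 D2n dominates_refl[of ?w] dominates_refl[of ?n]
      unfolding w1[symmetric] n1[symmetric] by auto
  next
    show "dom_interval ?w ?n \<subseteq> {?x1, ?x2, ?x3}"
    proof
      fix \<nu> assume "\<nu> \<in> dom_interval ?w ?n"
      then have P: "is_partition \<nu>" and D1: "dominates_le ?w \<nu>" and D2: "dominates_le \<nu> ?n"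
        unfolding dom_interval_def by auto
      have "\<nu> = replicate (a + 1) (x + 1) @ [1] \<or> \<nu> = (x + 1 + 1) # replicate (a + 1 - 2) (x + 1) @ [x + 1 - 1, 1]
          \<or> \<nu> = (x + 1 + 1) # replicate (a + 1 - 1) (x + 1)"
      proof (rule enum)
        show "2 \<le> x + 1" using x1 by simp
        show "2 \<le> a + 1" using a1 by simp
        show "is_partition \<nu>" by fact
        show "sum_list \<nu> = (a + 1) * (x + 1) + 1" using D1 sumw unfolding dominates_le_def by simp
        fix k
        show "k \<le> a + 1 \<Longrightarrow> k * (x + 1) \<le> sum_list (take k \<nu>)"
          using D1 Sw unfolding dominates_le_def by metis
        show "1 \<le> k \<Longrightarrow> k \<le> a + 1 \<Longrightarrow> sum_list (take k \<nu>) \<le> k * (x + 1) + 1"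
          using D2 Sn unfolding dominates_le_def by metis
      qed
      then show "\<nu> \<in> {?x1, ?x2, ?x3}" by auto
    qed
  qed
qed

lemma conj11:
  "conj_part (replicate (a + 1) (x + 1) @ [1]) = nuC a x 1 1"
  "conj_part ((x + 2) # replicate (a - 1) (x + 1) @ [x, 1]) = nuB a x 1 1"
  "conj_part ((x + 2) # replicate a (x + 1)) = nuA a x 1 1"
proof -
  obtain a' where aa: "a = Suc a'" using a1 by (cases a) auto
  obtain x' where xx: "x = Suc x'" using x1 by (cases x) auto
  show "conj_part (replicate (a + 1) (x + 1) @ [1]) = nuC a x 1 1"
  proof (rule conj_eqI)
    show "length (nuC a x 1 1) = hd (replicate (a + 1) (x + 1) @ [1])" unfolding nuC_def by simp
    fix j assume "j < hd (replicate (a + 1) (x + 1) @ [1])"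
    then have j: "j < x + 1" by simp
    show "length (filter (\<lambda>p. j < p) (replicate (a + 1) (x + 1) @ [1])) = nuC a x 1 1 ! j"
      unfolding nuC_def using j by (auto simp: lf_rep nth3)
  qed simp
  show "conj_part ((x + 2) # replicate (a - 1) (x + 1) @ [x, 1]) = nuB a x 1 1"
  proof (rule conj_eqI)
    show "length (nuB a x 1 1) = hd ((x + 2) # replicate (a - 1) (x + 1) @ [x, 1])" unfolding nuB_def using x1 by simp
    fix j assume "j < hd ((x + 2) # replicate (a - 1) (x + 1) @ [x, 1])"
    then have j: "j < x + 2" by simp
    show "length (filter (\<lambda>p. j < p) ((x + 2) # replicate (a - 1) (x + 1) @ [x, 1])) = nuB a x 1 1 ! j"
      unfolding nuB_def lf3 using j aa xx by (auto simp: lf_rep nth3 nth_append nth_Cons')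
  qed simp
  show "conj_part ((x + 2) # replicate a (x + 1)) = nuA a x 1 1"
  proof (rule conj_eqI)
    show "length (nuA a x 1 1) = hd ((x + 2) # replicate a (x + 1))" unfolding nuA_def by simp
    fix j assume "j < hd ((x + 2) # replicate a (x + 1))"
    then have j: "j < x + 2" by simp
    show "length (filter (\<lambda>p. j < p) ((x + 2) # replicate a (x + 1))) = nuA a x 1 1 ! j"
      unfolding nuA_def using j aa by (auto simp: lf_rep nth3 nth_append)
  qed simp
qed

end


theorem mainTheorem15:
  fixes a x b y :: nat
  assumes "1 \<le> a" "1 \<le> x" "1 \<le> b" "1 \<le> y"
  defines "lam \<equiv> (a + b + 1) # replicate x (a + 1) @ replicate y 1"
      and "mu \<equiv> [1]"
  shows "(skew_supp lam mu = dom_interval (skew_w lam mu) (skew_n lam mu) \<longleftrightarrow> b = 1 \<and> y = 1)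
       \<and> (b = 1 \<and> y = 1 \<longrightarrow>
           (let \<xi>1 = replicate (a + 1) (x + 1) @ [1];
                \<xi>2 = (x + 2) # replicate (a - 1) (x + 1) @ [x, 1];
                \<xi>3 = (x + 2) # replicate a (x + 1)
            in dom_interval (skew_w lam mu) (skew_n lam mu) = {\<xi>1, \<xi>2, \<xi>3}
             \<and> skew_supp lam mu = {\<xi>1, \<xi>2, \<xi>3}
             \<and> (\<forall>\<nu>. lr_coeff lam mu \<nu> = (if \<nu> \<in> {conj_part \<xi>1, conj_part \<xi>2, conj_part \<xi>3} then 1 else 0))))"
proof -
  note A = assms(1-4)
  have lam: "lam = lamL a x b y" unfolding lam_def lamL_def ..
  have mu: "mu = [1]" unfolding mu_def ..
  have W: "skew_w lam mu = (x + y) # replicate a (x + 1) @ replicate b 1"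
    using skew_w_lam[OF A] lam mu by simp
  have N: "skew_n lam mu = (x + y + 1) # replicate a (x + 1) @ replicate (b - 1) 1"
    using skew_n_lam[OF A] conj_nuA[OF A] lam mu by simp
  have S: "skew_supp lam mu = {(x + y + 1) # replicate a (x + 1) @ replicate (b - 1) 1,
      (x + y + 1) # replicate (a - 1) (x + 1) @ x # replicate b 1, (x + y) # replicate a (x + 1) @ replicate b 1}"
    using supp_lam[OF A] conj_nuA[OF A] conj_nuB[OF A] conj_nuC[OF A] lam mu by simp
  have LR: "lr_coeff lam mu = (\<lambda>\<nu>. if \<nu> \<in> {nuA a x b y, nuB a x b y, nuC a x b y} then 1 else 0)"
    using lr_lam[OF A] lam mu by simp
  define \<xi>1 where "\<xi>1 = replicate (a + 1) (x + 1) @ [1]"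
  define \<xi>2 where "\<xi>2 = (x + 2) # replicate (a - 1) (x + 1) @ [x, 1]"
  define \<xi>3 where "\<xi>3 = (x + 2) # replicate a (x + 1)"
  have C11: "dom_interval (skew_w lam mu) (skew_n lam mu) = {\<xi>1, \<xi>2, \<xi>3}
             \<and> skew_supp lam mu = {\<xi>1, \<xi>2, \<xi>3}
             \<and> (\<forall>\<nu>. lr_coeff lam mu \<nu> = (if \<nu> \<in> {conj_part \<xi>1, conj_part \<xi>2, conj_part \<xi>3} then 1 else 0))"
    if hby: "b = 1" "y = 1"
  proof (intro conjI)
    show "dom_interval (skew_w lam mu) (skew_n lam mu) = {\<xi>1, \<xi>2, \<xi>3}"
      unfolding W N \<xi>1_def \<xi>2_def \<xi>3_def using interval11[OF A(1,2)] hby by simp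
    show "skew_supp lam mu = {\<xi>1, \<xi>2, \<xi>3}"
      unfolding S \<xi>1_def \<xi>2_def \<xi>3_def using hby by auto
    have "{conj_part \<xi>1, conj_part \<xi>2, conj_part \<xi>3} = {nuA a x b y, nuB a x b y, nuC a x b y}"
      unfolding \<xi>1_def \<xi>2_def \<xi>3_def conj11[OF A(1,2)] using hby by auto
    then show "\<forall>\<nu>. lr_coeff lam mu \<nu> = (if \<nu> \<in> {conj_part \<xi>1, conj_part \<xi>2, conj_part \<xi>3} then 1 else 0)"
      unfolding LR by simp
  qed
  have iff: "skew_supp lam mu = dom_interval (skew_w lam mu) (skew_n lam mu) \<longleftrightarrow> b = 1 \<and> y = 1"
  proof
    assume "b = 1 \<and> y = 1"
    then show "skew_supp lam mu = dom_interval (skew_w lam mu) (skew_n lam mu)" using C11 by simp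
  next
    assume eq: "skew_supp lam mu = dom_interval (skew_w lam mu) (skew_n lam mu)"
    show "b = 1 \<and> y = 1"
    proof (rule ccontr)
      assume nb: "\<not> (b = 1 \<and> y = 1)"
      show False
      proof (cases "2 \<le> b")
        case True
        define v where "v = (x + y) # replicate a (x + 1) @ 2 # replicate (b - 2) (1::nat)"
        note wb = wit_b2[OF A True, folded v_def]
        have "v \<in> dom_interval (skew_w lam mu) (skew_n lam mu)" unfolding W N by (rule wb(1))
        then have "v \<in> skew_supp lam mu" using eq by simp
        then show False using wb(2-4) unfolding S by simp
      next
        case False
        then have b1: "b = 1" using A(3) by simp
        then have "2 \<le> y" using nb A(4) by simp
        define v where "v = (x + y) # (x + 2) # replicate (a - 1) (x + 1)"
        note wy = wit_y2[OF A \<open>2 \<le> y\<close> b1, folded v_def]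
        have "v \<in> dom_interval (skew_w lam mu) (skew_n lam mu)" unfolding W N by (rule wy(1))
        then have "v \<in> skew_supp lam mu" using eq by simp
        then show False using wy(2-4) unfolding S by simp
      qed
    qed
  qed
  show ?thesis unfolding Let_def \<xi>1_def[symmetric] \<xi>2_def[symmetric] \<xi>3_def[symmetric] using iff C11 by blast
qed


end
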